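(* Let $\{\mathcal G,(\Gamma_0,\Gamma_1),(\widetilde\Gamma_0,\widetilde\Gamma_1)\}$ be a triple for the adjoint pair $\{S,\widetilde S\}$ satisfying (G), (M) and $\operatorname{ran}\Gamma_0=\operatorname{ran}\widetilde\Gamma_0=\mathcal G$, with $\rho(A_0)\neq\emptyset$, $\gamma$-fields $\gamma,\widetilde\gamma$ and Weyl function $M$. Let $B_1,B_2$ be closable operators in $\mathcal G$ and suppose that for some $\lambda_0\in\rho(A_0)$ the operator $M(\lambda_0)B_1$ is closable and: (i) $1\in\rho(B_2\overline{M(\lambda_0)B_1})$; (ii) $\operatorname{ran}(B_2\overline{M(\lambda_0)B_1})\subset\operatorname{dom}B_1$; (iii) $\operatorname{ran}(\Gamma_1\upharpoonright\ker\Gamma_0)\subset\operatorname{dom}(B_1B_2)$. Then $A_{B_1B_2}$ is a closed operator with nonempty resolvent set, and for all $\lambda\in\rho(A_0)\cap\rho(A_{B_1B_2})$ $(A_{B_1B_2}-\lambda)^{-1}=(A_0-\lambda)^{-1}+\gamma(\lambda)B_1(I-B_2M(\lambda)B_1)^{-1}B_2\widetilde\gamma(\overline\lambda)^*$. In particular, for a closable operator $B$ in $\mathcal G$ such that $1\in\rho(BM(\lambda_0))$ for some $\lambda_0\in\rho(A_0)$ and $\operatorname{ran}(\Gamma_1\upharpoonright\ker\Gamma_0)\subset\operatorname{dom}B$, the operator $A_B$ is closed with nonempty resolvent set and $(A_B-\lambda)^{-1}=(A_0-\lambda)^{-1}+\gamma(\lambda)(I-BM(\lambda))^{-1}B\widetilde\gamma(\overline\lambda)^*$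 for all $\lambda\in\rho(A_0)\cap\rho(A_B)$.
   Context: Let $\mathfrak H$ be a separable Hilbert space. An adjoint pair $\{S,\widetilde S\}$ consists of densely defined closed operators $S,\widetilde S$ in $\mathfrak H$ with $(Sf,g)=(f,\widetilde Sg)$ for all $f\in\operatorname{dom}S$, $g\in\operatorname{dom}\widetilde S$. Fix operators $T\subset S^*$ and $\widetilde T\subset\widetilde S^*$ which are cores, i.e. $\overline T=S^*$ and $\overline{\widetilde T}=\widetilde S^*$. A triple $\{\mathcal G,(\Gamma_0,\Gamma_1),(\widetilde\Gamma_0,\widetilde\Gamma_1)\}$ for $\{S,\widetilde S\}$ consists of a Hilbert space $\mathcal G$ and linear maps $\Gamma_0,\Gamma_1:\operatorname{dom}T\to\mathcal G$, $\widetilde\Gamma_0,\widetilde\Gamma_1:\operatorname{dom}\widetilde T\to\mathcal G$. Put $A_0:=T\upharpoonright\ker\Gamma_0$ and $\widetilde A_0:=\widetilde T\upharpoonright\ker\widetilde\Gamma_0$. Conditions: (G) $(Tf,g)_{\mathfrak H}-(f,\widetilde Tg)_{\mathfrak H}=(\Gamma_1f,\widetilde\Gamma_0g)_{\mathcal G}-(\Gamma_0f,\widetilde\Gamma_1g)_{\mathcal G}$ for all $f\in\operatorname{dom}T$, $g\in\operatorname{dom}\widetilde T$; (M) $A_0^*=\widetilde A_0$ and $\widetilde A_0^*=A_0$. For $\lambda\in\rho(A_0)$ one has $\operatorname{dom}T=\ker\Gamma_0\dotplus\ker(T-\lambda)$, so $\Gamma_0\upharpoonright\ker(T-\lambda)$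 is injective; similarly for $\widetilde T$. The $\gamma$-fields are $\gamma(\lambda):=(\Gamma_0\upharpoonright\ker(T-\lambda))^{-1}$, $\widetilde\gamma(\mu):=(\widetilde\Gamma_0\upharpoonright\ker(\widetilde T-\mu))^{-1}$; the Weyl function is $M(\lambda):=\Gamma_1\gamma(\lambda)$, $\lambda\in\rho(A_0)$. Products of operators have their natural domains, e.g. $\operatorname{dom}(B_1B_2)=\{\varphi\in\operatorname{dom}B_2:B_2\varphi\in\operatorname{dom}B_1\}$; $(I-B_2M(\lambda)B_1)^{-1}$ is the inverse of the injective operator $I-B_2M(\lambda)B_1$. For a (not necessarily closed) operator $C$ in $\mathcal G$, $1\in\rho(C)$ means $I-C$ is a bijection of $\operatorname{dom}C$ onto $\mathcal G$ with bounded inverse; similarly $\rho(A)$ for operators in $\mathfrak H$. Define $A_{B_1B_2}f:=Tf$ on $\operatorname{dom}A_{B_1B_2}:=\{f\in\operatorname{dom}T:\Gamma_1f\in\operatorname{dom}(B_1B_2),\ B_1B_2\Gamma_1f=\Gamma_0f\}$ and $A_Bf:=Tf$ on $\operatorname{dom}A_B:=\{f\in\operatorname{dom}T:\Gamma_1f\in\operatorname{dom}B,\ B\Gamma_1f=\Gamma_0f\}$. *)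

theory Defs
  imports "HOL-Analysis.Analysis"
begin

class chilbert = banach +
  fixes scaleC :: "complex \<Rightarrow> 'a \<Rightarrow> 'a"
    and cinner :: "'a \<Rightarrow> 'a \<Rightarrow> complex"
  assumes scaleC_add_right: "scaleC a (x + y) = scaleC a x + scaleC a y"
    and scaleC_add_left: "scaleC (a + b) x = scaleC a x + scaleC b x"
    and scaleC_scaleC: "scaleC a (scaleC b x) = scaleC (a * b) x"
    and scaleC_one: "scaleC 1 x = x"
    and scaleR_scaleC: "scaleR r x = scaleC (complex_of_real r) x"
    and cinner_commute: "cinner x y = cnj (cinner y x)"
    and cinner_add_left: "cinner (x + y) z = cinner x z + cinner y z"
    and cinner_scaleC_left: "cinner (scaleC c x) y = c * cinner x y"
    and cinner_self_norm: "cinner x x = complex_of_real ((norm x)\<^sup>2)"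

text \<open>A (possibly unbounded, not necessarily everywhere defined) linear operator from
'a to 'b is represented by its graph, a set of pairs.\<close>

type_synonym ('a, 'b) lop = "('a \<times> 'b) set"

definition is_lop :: "('a::chilbert, 'b::chilbert) lop \<Rightarrow> bool" where
  "is_lop G \<longleftrightarrow> (0, 0) \<in> G
     \<and> (\<forall>x y x' y'. (x, y) \<in> G \<longrightarrow> (x', y') \<in> G \<longrightarrow> (x + x', y + y') \<in> G)
     \<and> (\<forall>c x y. (x, y) \<in> G \<longrightarrow> (scaleC c x, scaleC c y) \<in> G)
     \<and> (\<forall>y. (0, y) \<in> G \<longrightarrow> y = 0)"

definition ldom :: "('a, 'b) lop \<Rightarrow> 'a set" where "ldom G = fst ` G"
definition lran :: "('a, 'b) lop \<Rightarrow> 'b set" where "lran G = snd ` G"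

definition closed_lop :: "('a::chilbert, 'b::chilbert) lop \<Rightarrow> bool" where
  "closed_lop G \<longleftrightarrow> is_lop G \<and> closed G"

definition closable :: "('a::chilbert, 'b::chilbert) lop \<Rightarrow> bool" where
  "closable G \<longleftrightarrow> is_lop G \<and> is_lop (closure G)"

definition densely_defined :: "('a::chilbert, 'b::chilbert) lop \<Rightarrow> bool" where
  "densely_defined G \<longleftrightarrow> closure (ldom G) = UNIV"

definition ladj :: "('a::chilbert, 'b::chilbert) lop \<Rightarrow> ('b, 'a) lop" where
  "ladj G = {(g, h). \<forall>f y. (f, y) \<in> G \<longrightarrow> cinner y g = cinner f h}"

text \<open>Product A B with natural domain: first B, then A.\<close>
definition lcomp :: "('b, 'c) lop \<Rightarrow> ('a, 'b) lop \<Rightarrow> ('a, 'c) lop" where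
  "lcomp A B = B O A"

definition lsum :: "('a, 'b::plus) lop \<Rightarrow> ('a, 'b) lop \<Rightarrow> ('a, 'b) lop" where
  "lsum P Q = {(x, y + z) | x y z. (x, y) \<in> P \<and> (x, z) \<in> Q}"

text \<open>A - \<lambda> and I - C; inverses are converses of graphs.\<close>
definition lshift :: "('a::chilbert, 'a) lop \<Rightarrow> complex \<Rightarrow> ('a, 'a) lop" where
  "lshift A l = {(x, y - scaleC l x) | x y. (x, y) \<in> A}"

definition lid_minus :: "('a::chilbert, 'a) lop \<Rightarrow> ('a, 'a) lop" where
  "lid_minus C = {(x, x - y) | x y. (x, y) \<in> C}"

definition resolvent_set :: "('a::chilbert, 'a) lop \<Rightarrow> complex set" where
  "resolvent_set A = {l. lran (lshift A l) = UNIV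
      \<and> (\<forall>x. (x, 0) \<in> lshift A l \<longrightarrow> x = 0)
      \<and> (\<exists>K. \<forall>x y. (x, y) \<in> lshift A l \<longrightarrow> norm x \<le> K * norm y)}"

definition clinear_on :: "'a::chilbert set \<Rightarrow> ('a \<Rightarrow> 'b::chilbert) \<Rightarrow> bool" where
  "clinear_on D f \<longleftrightarrow> (\<forall>x\<in>D. \<forall>y\<in>D. f (x + y) = f x + f y)
     \<and> (\<forall>c. \<forall>x\<in>D. f (scaleC c x) = scaleC c (f x))"

text \<open>Restriction of T to ker \<Gamma>0 (this gives A0 and its tilde counterpart).\<close>
definition ker_restr :: "('a::chilbert, 'a) lop \<Rightarrow> ('a \<Rightarrow> 'b::chilbert) \<Rightarrow> ('a, 'a) lop" where
  "ker_restr T G0 = {(f, y). (f, y) \<in> T \<and> G0 f = 0}"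

definition gamma_field :: "('a::chilbert, 'a) lop \<Rightarrow> ('a \<Rightarrow> 'b::chilbert) \<Rightarrow> complex \<Rightarrow> ('b, 'a) lop" where
  "gamma_field T G0 l = {(G0 f, f) | f. (f, scaleC l f) \<in> T}"

definition weyl :: "('a::chilbert, 'a) lop \<Rightarrow> ('a \<Rightarrow> 'b::chilbert) \<Rightarrow> ('a \<Rightarrow> 'b) \<Rightarrow> complex \<Rightarrow> ('b, 'b) lop" where
  "weyl T G0 G1 l = lcomp {(f, G1 f) | f. f \<in> ldom T} (gamma_field T G0 l)"

definition A_ext :: "('a::chilbert, 'a) lop \<Rightarrow> ('a \<Rightarrow> 'b::chilbert) \<Rightarrow> ('a \<Rightarrow> 'b) \<Rightarrow> ('b, 'b) lop \<Rightarrow> ('a, 'a) lop" where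
  "A_ext T G0 G1 B = {(f, y). (f, y) \<in> T \<and> (G1 f, G0 f) \<in> B}"

end

theory Submission
  imports Defs "HOL-Analysis.Analysis"
begin


lemma scaleC_zero_right[simp]: "scaleC c (0::'a::chilbert) = 0"
  using scaleC_add_right[of c 0 0] by simp

lemma scaleC_zero_left[simp]: "scaleC 0 (x::'a::chilbert) = 0"
  using scaleC_add_left[of 0 0 x] by simp

lemma scaleC_minus_one: "scaleC (-1) (x::'a::chilbert) = - x"
proof -
  have "scaleC 1 x + scaleC (-1) x = 0" using scaleC_add_left[of 1 "-1" x] by simp
  then show ?thesis using add_eq_0_iff scaleC_one by metis
qed

lemma scaleC_minus_right: "scaleC c (- (x::'a::chilbert)) = - scaleC c x"
proof -
  have "scaleC c (- x) = scaleC c (scaleC (-1) x)" by (simp only: scaleC_minus_one)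
  also have "\<dots> = scaleC (-1) (scaleC c x)" by (simp only: scaleC_scaleC mult.commute)
  also have "\<dots> = - scaleC c x" by (rule scaleC_minus_one)
  finally show ?thesis .
qed

lemma scaleC_diff_right: "scaleC c ((x::'a::chilbert) - y) = scaleC c x - scaleC c y"
  by (simp only: diff_conv_add_uminus[of x y] scaleC_add_right scaleC_minus_right) simp

lemma scaleC_minus_left: "scaleC (- c) (x::'a::chilbert) = - scaleC c x"
proof -
  have "scaleC (- c) x = scaleC (-1) (scaleC c x)" by (simp only: scaleC_scaleC) simp
  then show ?thesis by (simp only: scaleC_minus_one)
qed

lemma scaleC_diff_left: "scaleC (a - b) (x::'a::chilbert) = scaleC a x - scaleC b x"
  by (simp only: diff_conv_add_uminus[of a b] scaleC_add_left scaleC_minus_left) simp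

lemma cinner_zero_left[simp]: "cinner 0 (y::'a::chilbert) = 0"
  using cinner_add_left[of 0 0 y] by simp

lemma cinner_add_right: "cinner (x::'a::chilbert) (y + z) = cinner x y + cinner x z"
proof -
  have "cinner x (y + z) = cnj (cinner (y + z) x)" by (rule cinner_commute)
  also have "\<dots> = cnj (cinner y x) + cnj (cinner z x)" by (simp only: cinner_add_left complex_cnj_add)
  also have "\<dots> = cinner x y + cinner x z" by (simp only: cinner_commute[of x y] cinner_commute[of x z])
  finally show ?thesis .
qed

lemma cinner_scaleC_right: "cinner (x::'a::chilbert) (scaleC c y) = cnj c * cinner x y"
proof -
  have "cinner x (scaleC c y) = cnj (cinner (scaleC c y) x)" by (rule cinner_commute)
  also have "\<dots> = cnj c * cnj (cinner y x)" by (simp only: cinner_scaleC_left complex_cnj_mult)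
  also have "\<dots> = cnj c * cinner x y" by (simp only: cinner_commute[of x y])
  finally show ?thesis .
qed

lemma cinner_zero_right[simp]: "cinner (x::'a::chilbert) 0 = 0"
  using cinner_add_right[of x 0 0] by simp

lemma cinner_minus_left: "cinner (- (x::'a::chilbert)) y = - cinner x y"
proof -
  have "cinner x y + cinner (- x) y = 0" using cinner_add_left[of x "- x" y] by simp
  then show ?thesis using add_eq_0_iff by blast
qed

lemma cinner_minus_right: "cinner (x::'a::chilbert) (- y) = - cinner x y"
proof -
  have "cinner x y + cinner x (- y) = 0" using cinner_add_right[of x y "- y"] by simp
  then show ?thesis by (simp add: add_eq_0_iff)
qed

lemma cinner_diff_left: "cinner ((x::'a::chilbert) - y) z = cinner x z - cinner y z"
  by (simp only: diff_conv_add_uminus[of x y] cinner_add_left cinner_minus_left) simp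

lemma cinner_diff_right: "cinner (x::'a::chilbert) (y - z) = cinner x y - cinner x z"
  by (simp only: diff_conv_add_uminus[of y z] cinner_add_right cinner_minus_right) simp

lemma cinner_eq_zero_iff: "cinner x x = 0 \<longleftrightarrow> (x::'a::chilbert) = 0"
  using cinner_self_norm[of x] by simp

lemma cinner_ext: "(\<And>y. cinner x y = 0) \<Longrightarrow> (x::'a::chilbert) = 0"
  using cinner_eq_zero_iff by blast

lemma cinner_ext_right: "(\<And>y. cinner y x = 0) \<Longrightarrow> (x::'a::chilbert) = 0"
  using cinner_eq_zero_iff by blast

lemma norm_scaleC: "norm (scaleC c (x::'a::chilbert)) = cmod c * norm x"
proof -
  have "complex_of_real ((norm (scaleC c x))\<^sup>2) = cinner (scaleC c x) (scaleC c x)"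
    by (rule cinner_self_norm[symmetric])
  also have "\<dots> = (c * cnj c) * cinner x x" by (simp add: cinner_scaleC_left cinner_scaleC_right mult.assoc)
  also have "\<dots> = complex_of_real ((cmod c)\<^sup>2 * (norm x)\<^sup>2)"
    by (simp add: complex_norm_square[symmetric] cinner_self_norm)
  finally have "(norm (scaleC c x))\<^sup>2 = (cmod c * norm x)\<^sup>2"
    unfolding of_real_eq_iff power_mult_distrib .
  then show ?thesis
    by (simp add: power2_eq_iff_nonneg)
qed

lemma norm_sub_proj:
  fixes w v :: "'a::chilbert"
  assumes "v \<noteq> 0"
  shows "(norm (w - scaleC (cinner w v / complex_of_real ((norm v)\<^sup>2)) v))\<^sup>2
       = (norm w)\<^sup>2 - (cmod (cinner w v))\<^sup>2 / (norm v)\<^sup>2"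
proof -
  define c where "c = cinner w v"
  define n where "n = (norm v)\<^sup>2"
  define t where "t = c / complex_of_real n"
  have n0: "n > 0" using assms by (simp add: n_def)
  have n0': "complex_of_real n \<noteq> 0" using n0 by simp
  have cc: "c * cnj c = complex_of_real ((cmod c)\<^sup>2)" by (rule complex_norm_square[symmetric])
  have tc: "cnj t = cnj c / complex_of_real n" by (simp add: t_def)
  have vw: "cinner v w = cnj c" by (simp add: c_def cinner_commute[of v w])
  have vv: "cinner v v = complex_of_real n" by (simp add: n_def cinner_self_norm)
  have e1: "cnj t * c = complex_of_real ((cmod c)\<^sup>2 / n)"
    unfolding tc using cc by (simp add: mult.commute)
  have e2: "t * cnj c = complex_of_real ((cmod c)\<^sup>2 / n)"
    unfolding t_def using cc by simp
  have e3: "t * cnj t * complex_of_real n = complex_of_real ((cmod c)\<^sup>2 / n)"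
    unfolding tc t_def using cc n0' by (simp add: field_simps)
  have "complex_of_real ((norm (w - scaleC t v))\<^sup>2) = cinner (w - scaleC t v) (w - scaleC t v)"
    by (simp add: cinner_self_norm)
  also have "\<dots> = cinner w w - cnj t * cinner w v - t * cinner v w + t * cnj t * cinner v v"
    by (simp add: cinner_diff_left cinner_diff_right cinner_scaleC_left cinner_scaleC_right algebra_simps)
  also have "\<dots> = complex_of_real ((norm w)\<^sup>2) - complex_of_real ((cmod c)\<^sup>2 / n)"
    unfolding vw vv c_def[symmetric] e1 e2 e3 by (simp add: cinner_self_norm)
  finally have "(norm (w - scaleC t v))\<^sup>2 = (norm w)\<^sup>2 - (cmod c)\<^sup>2 / n"
    by (metis of_real_diff of_real_eq_iff)
  then show ?thesis by (simp add: t_def c_def n_def)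
qed

lemma cauchy_schwarz: "cmod (cinner x y) \<le> norm x * norm (y::'a::chilbert)"
proof (cases "y = 0")
  case True then show ?thesis by simp
next
  case False
  have ny: "norm y > 0" using False by simp
  have "0 \<le> (norm x)\<^sup>2 - (cmod (cinner x y))\<^sup>2 / (norm y)\<^sup>2"
    using norm_sub_proj[OF False, of x] by (metis zero_le_power2)
  then have "(cmod (cinner x y))\<^sup>2 \<le> (norm x * norm y)\<^sup>2"
    using ny by (simp add: field_simps power_mult_distrib)
  then show ?thesis
    by (rule power2_le_imp_le) simp
qed


lemma bb_cinner: "bounded_bilinear (cinner :: 'a::chilbert \<Rightarrow> 'a \<Rightarrow> complex)"
proof
  fix a a' b b' :: 'a and r :: real
  show "cinner (a + a') b = cinner a b + cinner a' b" by (rule cinner_add_left)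
  show "cinner a (b + b') = cinner a b + cinner a b'" by (rule cinner_add_right)
  show "cinner (r *\<^sub>R a) b = r *\<^sub>R cinner a b"
    by (simp add: scaleR_scaleC cinner_scaleC_left scaleR_conv_of_real)
  show "cinner a (r *\<^sub>R b) = r *\<^sub>R cinner a b"
    by (simp add: scaleR_scaleC cinner_scaleC_right scaleR_conv_of_real)
  show "\<exists>K. \<forall>a b::'a. cmod (cinner a b) \<le> norm a * norm b * K"
    by (rule exI[of _ 1]) (simp add: cauchy_schwarz)
qed

lemmas tendsto_cinner = bounded_bilinear.tendsto[OF bb_cinner]

lemma parallelogram:
  fixes a b :: "'a::chilbert"
  shows "(norm (a + b))\<^sup>2 + (norm (a - b))\<^sup>2 = 2 * (norm a)\<^sup>2 + 2 * (norm b)\<^sup>2"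
proof -
  have "complex_of_real ((norm (a + b))\<^sup>2 + (norm (a - b))\<^sup>2) = cinner (a+b) (a+b) + cinner (a-b) (a-b)"
    by (simp add: cinner_self_norm)
  also have "\<dots> = 2 * cinner a a + 2 * cinner b b"
    by (simp add: cinner_add_left cinner_add_right cinner_diff_left cinner_diff_right)
  also have "\<dots> = complex_of_real (2 * (norm a)\<^sup>2 + 2 * (norm b)\<^sup>2)"
    by (simp add: cinner_self_norm)
  finally show ?thesis using of_real_eq_iff by blast
qed


lemma riesz:
  fixes F :: "'a::chilbert \<Rightarrow> complex"
  assumes add: "\<And>x y. F (x + y) = F x + F y"
    and sc: "\<And>c x. F (scaleC c x) = c * F x"
    and bnd: "\<And>x. cmod (F x) \<le> K * norm x"
  shows "\<exists>g. \<forall>x. F x = cinner x g"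
proof (cases "\<forall>x. F x = 0")
  case True then show ?thesis by (intro exI[of _ 0]) simp
next
  case False
  then obtain z0 where z0: "F z0 \<noteq> 0" by blast
  have F0: "F 0 = 0" using add[of 0 0] by simp
  have Fminus: "F (- x) = - F x" for x
    using sc[of "-1" x] by (simp add: scaleC_minus_one)
  have Fdiff: "F (x - y) = F x - F y" for x y
    using add[of x "- y"] Fminus[of y] by simp
  define N where "N = {x. F x = 0}"
  have N0: "0 \<in> N" using F0 by (simp add: N_def)
  have Nadd: "x \<in> N \<Longrightarrow> y \<in> N \<Longrightarrow> x + y \<in> N" for x y by (simp add: N_def add)
  have Nsc: "x \<in> N \<Longrightarrow> scaleC c x \<in> N" for x c by (simp add: N_def sc)
  have Ndiff: "x \<in> N \<Longrightarrow> y \<in> N \<Longrightarrow> x - y \<in> N" for x y by (simp add: N_def Fdiff)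
  have Ncl: "closed N"
    unfolding closed_sequential_limits
  proof (intro allI impI, elim conjE)
    fix X x assume XN: "\<forall>n. X n \<in> N" and lim: "X \<longlonglongrightarrow> x"
    have "(\<lambda>n. K * norm (X n - x)) \<longlonglongrightarrow> K * norm (x - x)"
      by (intro tendsto_intros lim)
    then have l0: "(\<lambda>n. K * norm (X n - x)) \<longlonglongrightarrow> 0" by simp
    have "cmod (F x) \<le> K * norm (X n - x)" for n
    proof -
      have "cmod (F x) = cmod (F (X n - x))" using XN by (simp add: N_def Fdiff)
      also have "\<dots> \<le> K * norm (X n - x)" by (rule bnd)
      finally show ?thesis .
    qed
    then have "cmod (F x) \<le> 0"
      by (intro LIMSEQ_le_const[OF l0]) auto
    then show "x \<in> N" by (simp add: N_def)
  qed
  define D where "D = (\<lambda>n. norm (z0 - n)) ` N"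
  define d where "d = Inf D"
  have Dne: "D \<noteq> {}" using N0 by (auto simp: D_def)
  have Dbdd: "bdd_below D" by (auto simp: D_def intro: bdd_belowI[of _ 0])
  have dle: "d \<le> norm (z0 - n)" if "n \<in> N" for n
    unfolding d_def D_def using that Dbdd D_def by (intro cInf_lower) auto
  have d0: "0 \<le> d" unfolding d_def using Dne by (intro cInf_greatest) (auto simp: D_def)
  have "\<exists>n. n \<in> N \<and> norm (z0 - n) < d + 1 / (real k + 1)" for k
  proof -
    have "Inf D < d + 1 / (real k + 1)" unfolding d_def by simp
    from cInf_lessD[OF Dne this] show ?thesis by (auto simp: D_def)
  qed
  then obtain X where XN: "\<And>k. X k \<in> N" and Xd: "\<And>k. norm (z0 - X k) < d + 1 / (real k + 1)"
    by metis
  have sq: "(norm (X j - X k))\<^sup>2 \<le> 4 * (2*d+1) * (1 / (real M + 1))" if "j \<ge> M" "k \<ge> M" for j k M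
  proof -
    define a where "a = z0 - X j"
    define b where "b = z0 - X k"
    have s2: "scaleC 2 z0 = z0 + z0" using scaleC_add_left[of 1 1 z0] by (simp add: scaleC_one)
    have ab: "a + b = scaleC 2 (z0 - scaleC (1/2) (X j + X k))"
      unfolding a_def b_def scaleC_diff_right scaleC_scaleC s2 by (simp add: scaleC_one)
    have "scaleC (1/2) (X j + X k) \<in> N" by (intro Nsc Nadd XN)
    then have "d \<le> norm (z0 - scaleC (1/2) (X j + X k))" by (rule dle)
    then have "2 * d \<le> norm (a + b)" unfolding ab by (simp add: norm_scaleC)
    then have nab: "4 * d\<^sup>2 \<le> (norm (a + b))\<^sup>2"
      using power_mono[of "2*d" "norm (a+b)" 2] d0 by (simp add: power_mult_distrib)
    have e1: "1 / (real j + 1) \<le> 1 / (real M + 1)" "1 / (real k + 1) \<le> 1 / (real M + 1)"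
      using that by (auto simp: divide_simps)
    have e0: "0 \<le> 1 / (real M + 1)" "1 / (real M + 1) \<le> 1" by auto
    have na: "norm a \<le> d + 1/(real M + 1)" using Xd[of j] e1 by (simp add: a_def)
    have nb: "norm b \<le> d + 1/(real M + 1)" using Xd[of k] e1 by (simp add: b_def)
    define e where "e = 1 / (real M + 1)"
    have na2: "(norm a)\<^sup>2 \<le> (d + e)\<^sup>2" using na unfolding e_def by (intro power_mono) auto
    have nb2: "(norm b)\<^sup>2 \<le> (d + e)\<^sup>2" using nb unfolding e_def by (intro power_mono) auto
    have "a - b = X k - X j" by (simp add: a_def b_def)
    then have "(norm (X j - X k))\<^sup>2 = (norm (a - b))\<^sup>2" by (simp add: norm_minus_commute)
    also have "\<dots> = 2 * (norm a)\<^sup>2 + 2 * (norm b)\<^sup>2 - (norm (a + b))\<^sup>2"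
      using parallelogram[of a b] by simp
    also have "\<dots> \<le> 4 * (d + e)\<^sup>2 - 4 * d\<^sup>2" using na2 nb2 nab by simp
    also have "\<dots> = 4 * e * (2 * d + e)" by (simp add: power2_eq_square algebra_simps)
    also have "\<dots> \<le> 4 * e * (2 * d + 1)" using e0 d0 unfolding e_def[symmetric] by (intro mult_left_mono) auto
    finally show ?thesis by (simp add: e_def mult.commute mult.left_commute)
  qed
  have "Cauchy X"
  proof (rule CauchyI)
    fix r :: real assume r: "0 < r"
    obtain M :: nat where M0: "4 * (2*d+1) / (r^2) < real M"
      using reals_Archimedean2 by blast
    then have M: "4 * (2*d+1) / (r^2) < real M + 1" by linarith
    have "\<forall>m\<ge>M. \<forall>n\<ge>M. norm (X m - X n) < r"
    proof (intro allI impI)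
      fix m n assume "m \<ge> M" "n \<ge> M"
      have "(norm (X m - X n))\<^sup>2 \<le> 4 * (2*d+1) * (1 / (real M + 1))" by (rule sq) fact+
      also have "\<dots> < r\<^sup>2"
      proof -
        have "4 * (2*d+1) < r\<^sup>2 * (real M + 1)" using M r by (simp add: pos_divide_less_eq mult.commute)
        then show ?thesis by (simp add: pos_divide_less_eq)
      qed
      finally show "norm (X m - X n) < r" using r by (simp add: power_less_imp_less_base)
    qed
    then show "\<exists>M. \<forall>m\<ge>M. \<forall>n\<ge>M. norm (X m - X n) < r" by blast
  qed
  then obtain n where lim: "X \<longlonglongrightarrow> n" using Cauchy_convergent_iff convergent_def by blast
  have nN: "n \<in> N" using Ncl lim XN closed_sequential_limits by blast
  have nmin: "norm (z0 - n) \<le> norm (z0 - v)" if "v \<in> N" for v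
  proof -
    have h1: "(\<lambda>k. 1 / (real k + 1)) \<longlonglongrightarrow> 0"
      using LIMSEQ_inverse_real_of_nat by (simp add: inverse_eq_divide add.commute)
    have h2: "(\<lambda>k. norm (X k - n)) \<longlonglongrightarrow> norm (n - n)"
      by (intro tendsto_intros lim)
    have "(\<lambda>k. d + 1 / (real k + 1) + norm (X k - n)) \<longlonglongrightarrow> d + 0 + norm (n - n)"
      by (intro tendsto_add tendsto_const h1 h2)
    then have l: "(\<lambda>k. d + 1 / (real k + 1) + norm (X k - n)) \<longlonglongrightarrow> d" by simp
    have "norm (z0 - n) \<le> d + 1 / (real k + 1) + norm (X k - n)" for k
    proof -
      have "norm (z0 - n) \<le> norm (z0 - X k) + norm (X k - n)" using norm_triangle_ineq[of "z0 - X k" "X k - n"] by simp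
      then show ?thesis using Xd[of k] by simp
    qed
    then have "norm (z0 - n) \<le> d" by (intro LIMSEQ_le_const[OF l]) auto
    then show ?thesis using dle[OF that] by simp
  qed
  define w where "w = z0 - n"
  have Fw: "F w = F z0" using nN by (simp add: w_def Fdiff N_def)
  have w0: "w \<noteq> 0" using Fw z0 F0 by auto
  have orth: "cinner w v = 0" if "v \<in> N" for v
  proof (rule ccontr)
    assume ne: "cinner w v \<noteq> 0"
    then have v0: "v \<noteq> 0" by auto
    define t where "t = cinner w v / complex_of_real ((norm v)\<^sup>2)"
    have "n + scaleC t v \<in> N" by (intro Nadd Nsc nN that)
    then have "norm w \<le> norm (w - scaleC t v)"
      using nmin[of "n + scaleC t v"] by (simp add: w_def diff_diff_eq)
    then have "(norm w)\<^sup>2 \<le> (norm (w - scaleC t v))\<^sup>2" by (simp add: power_mono)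
    also have "\<dots> = (norm w)\<^sup>2 - (cmod (cinner w v))\<^sup>2 / (norm v)\<^sup>2"
      unfolding t_def by (rule norm_sub_proj[OF v0])
    finally have "(cmod (cinner w v))\<^sup>2 / (norm v)\<^sup>2 \<le> 0" by simp
    moreover have "(cmod (cinner w v))\<^sup>2 / (norm v)\<^sup>2 > 0" using ne v0 by simp
    ultimately show False by simp
  qed
  define g where "g = scaleC (cnj (F w) / complex_of_real ((norm w)\<^sup>2)) w"
  have "F x = cinner x g" for x
  proof -
    define s where "s = F x / F w"
    have "x - scaleC s w \<in> N" using Fw z0 by (simp add: N_def Fdiff sc s_def)
    then have "cinner (x - scaleC s w) w = 0" using orth
      by (metis cinner_commute complex_cnj_zero)
    then have xw: "cinner x w = s * complex_of_real ((norm w)\<^sup>2)"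
      by (simp add: cinner_diff_left cinner_scaleC_left cinner_self_norm)
    show ?thesis unfolding g_def cinner_scaleC_right xw s_def using w0 Fw z0
      by (simp add: field_simps)
  qed
  then show ?thesis by blast
qed


lemma cgt_fun:
  fixes f :: "'a::banach \<Rightarrow> 'b::banach"
  assumes add: "\<And>x y. f (x + y) = f x + f y"
    and scl: "\<And>r x. f (r *\<^sub>R x) = r *\<^sub>R f x"
    and cl: "\<And>X x y. X \<longlonglongrightarrow> x \<Longrightarrow> (\<lambda>n. f (X n)) \<longlonglongrightarrow> y \<Longrightarrow> f x = y"
  shows "\<exists>K. \<forall>x. norm (f x) \<le> K * norm x"
proof -
  have f0: "f 0 = 0" using add[of 0 0] by simp
  have fdiff: "f (x - y) = f x - f y" for x y
    using add[of "x - y" y] by (simp add: algebra_simps)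
  define W where "W = (\<lambda>c::real. {x. norm (f x) \<le> c})"
  have "\<exists>n::nat. interior (closure (W (real n))) \<noteq> {}"
  proof (rule ccontr)
    assume "\<not> ?thesis"
    then have e: "\<And>n::nat. interior (closure (W (real n))) = {}" by blast
    have "euclidean interior_of \<Union>(range (\<lambda>n::nat. closure (W (real n)))) = {}"
      using completely_metrizable_space_euclidean e by (intro Baire_category_alt) auto
    moreover have "\<Union>(range (\<lambda>n::nat. closure (W (real n)))) = UNIV"
    proof -
      have "x \<in> W (real (nat \<lceil>norm (f x)\<rceil>))" for x
        by (simp add: W_def)
      then show ?thesis using closure_subset by blast
    qed
    ultimately show False by simp
  qed
  then obtain n :: nat and x0 where "x0 \<in> interior (closure (W (real n)))" by blast
  then obtain r where r0: "r > 0" "ball x0 r \<subseteq> interior (closure (W (real n)))"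
    using open_interior[of "closure (W (real n))"] unfolding open_contains_ball by blast
  then have r: "r > 0" "ball x0 r \<subseteq> closure (W (real n))"
    using interior_subset by blast+
  have stepA: "\<exists>w. norm (f w) \<le> 2 * real n \<and> norm (z - w) < e" if "norm z < r" "e > 0" for z e
  proof -
    have e2: "e/2 > 0" using that by simp
    have "x0 + z \<in> ball x0 r" using that by (simp add: dist_norm)
    then have "x0 + z \<in> closure (W (real n))" using r by blast
    then have "\<forall>\<epsilon>>0. \<exists>y\<in>W (real n). dist y (x0 + z) < \<epsilon>" by (simp only: closure_approachable)
    then obtain a where a: "a \<in> W (real n)" "dist a (x0 + z) < e/2"
      using e2 by blast
    have "x0 \<in> ball x0 r" using r by simp
    then have "x0 \<in> closure (W (real n))" using r by blast
    then have "\<forall>\<epsilon>>0. \<exists>y\<in>W (real n). dist y x0 < \<epsilon>" by (simp only: closure_approachable)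
    then obtain b where b: "b \<in> W (real n)" "dist b x0 < e/2"
      using e2 by blast
    have "norm (f a - f b) \<le> norm (f a) + norm (f b)" by (rule norm_triangle_ineq4)
    then have "norm (f (a - b)) \<le> 2 * real n"
      using a(1) b(1) by (simp add: W_def fdiff)
    moreover have "norm (z - (a - b)) < e"
    proof -
      have "z - (a - b) = (b - x0) - (a - (x0 + z))" by (simp add: algebra_simps)
      then have "norm (z - (a - b)) \<le> norm (b - x0) + norm (a - (x0 + z))"
        by (metis norm_triangle_ineq4)
      then show ?thesis using a b by (simp add: dist_norm)
    qed
    ultimately show ?thesis by blast
  qed
  define M where "M = 4 * real n / r"
  have M0: "M \<ge> 0" using r by (simp add: M_def)
  have stepB: "\<exists>w. norm (f w) \<le> M * norm z \<and> norm (z - w) < e" if "e > 0" for z e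
  proof (cases "z = 0")
    case True then show ?thesis using f0 that by (intro exI[of _ 0]) simp
  next
    case False
    define s where "s = r / (2 * norm z)"
    have s0: "s > 0" using False r by (simp add: s_def)
    have "norm (s *\<^sub>R z) < r" using False r by (simp add: s_def)
    then obtain w' where w': "norm (f w') \<le> 2 * real n" "norm (s *\<^sub>R z - w') < s * e"
      using stepA s0 \<open>e > 0\<close> by (meson mult_pos_pos)
    define w where "w = (1/s) *\<^sub>R w'"
    have "norm (f w) = norm (f w') / s" using s0 by (simp add: w_def scl)
    also have "\<dots> \<le> 2 * real n / s" using w' s0 by (simp add: divide_right_mono)
    also have "\<dots> = M * norm z" using False r by (simp add: s_def M_def field_simps)
    finally have 1: "norm (f w) \<le> M * norm z" .
    have "z - w = (1/s) *\<^sub>R (s *\<^sub>R z - w')" using s0 by (simp add: w_def algebra_simps)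
    then have "norm (z - w) = norm (s *\<^sub>R z - w') / s" using s0 by simp
    also have "\<dots> < e" using w' s0 by (simp add: divide_less_eq mult.commute)
    finally show ?thesis using 1 by blast
  qed
  define Wf where "Wf = (\<lambda>z e. SOME w. norm (f w) \<le> M * norm z \<and> norm (z - w) < e)"
  have Wf: "\<And>z e. e > 0 \<Longrightarrow> norm (f (Wf z e)) \<le> M * norm z \<and> norm (z - Wf z e) < e"
    unfolding Wf_def by (rule someI_ex) (rule stepB)
  have "norm (f z) \<le> (2 * M) * norm z" for z
  proof (cases "z = 0")
    case True then show ?thesis by (simp add: f0)
  next
    case False
    define ep where "ep = (\<lambda>k::nat. norm z * (1/2)^(Suc k))"
    have ep0: "ep k > 0" for k using False by (simp add: ep_def)
    define u where "u = rec_nat z (\<lambda>k uk. uk - Wf uk (ep k))"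
    define w where "w = (\<lambda>k. Wf (u k) (ep k))"
    have u0: "u 0 = z" and uS: "u (Suc k) = u k - w k" for k by (simp_all add: u_def w_def)
    have unorm: "norm (u k) \<le> norm z * (1/2)^k" for k
    proof (cases k)
      case 0 then show ?thesis by (simp add: u0)
    next
      case (Suc j)
      have "norm (u (Suc j)) < ep j" using Wf[OF ep0[of j], of "u j"] by (simp add: uS w_def)
      then show ?thesis using Suc by (simp add: ep_def)
    qed
    have fw: "norm (f (w k)) \<le> M * norm z * (1/2)^k" for k
    proof -
      have "norm (f (w k)) \<le> M * norm (u k)" using Wf[OF ep0[of k], of "u k"] by (simp add: w_def)
      also have "\<dots> \<le> M * (norm z * (1/2)^k)" using unorm M0 by (intro mult_left_mono) auto
      finally show ?thesis by (simp add: mult.assoc)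
    qed
    have psum: "(\<Sum>i<k. w i) = z - u k" for k
      by (induction k) (simp_all add: u0 uS algebra_simps)
    have fsum: "f (\<Sum>i<k. w i) = (\<Sum>i<k. f (w i))" for k
      by (induction k) (simp_all add: f0 add)
    have ulim: "u \<longlonglongrightarrow> 0"
    proof -
      have p0: "(\<lambda>k. (1/2::real)^k) \<longlonglongrightarrow> 0" by (rule LIMSEQ_power_zero) simp
      have g0: "(\<lambda>k. norm z * (1/2::real)^k) \<longlonglongrightarrow> norm z * 0"
        by (rule tendsto_mult[OF tendsto_const p0])
      have ev: "eventually (\<lambda>k. norm (u k) \<le> norm z * (1/2)^k) sequentially"
        using unorm by (intro always_eventually) blast
      show ?thesis using Lim_null_comparison[OF ev] g0 by simp
    qed
    have wlim: "(\<lambda>k. \<Sum>i<k. w i) \<longlonglongrightarrow> z"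
    proof -
      have "(\<lambda>k. z - u k) \<longlonglongrightarrow> z - 0" by (rule tendsto_diff[OF tendsto_const ulim])
      then show ?thesis unfolding psum by simp
    qed
    have summ: "summable (\<lambda>i. f (w i))"
      by (rule summable_comparison_test[of _ "\<lambda>k. M * norm z * (1/2)^k"])
         (use fw in \<open>auto intro!: summable_mult summable_geometric\<close>)
    have flim: "(\<lambda>k. f (\<Sum>i<k. w i)) \<longlonglongrightarrow> suminf (\<lambda>i. f (w i))"
      unfolding fsum by (rule summable_LIMSEQ[OF summ])
    have fz: "f z = suminf (\<lambda>i. f (w i))" by (rule cl[OF wlim flim])
    have bnd: "norm (\<Sum>i<k. f (w i)) \<le> 2 * M * norm z" for k
    proof -
      have "norm (\<Sum>i<k. f (w i)) \<le> (\<Sum>i<k. M * norm z * (1/2)^i)"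
        by (rule order_trans[OF norm_sum sum_mono]) (rule fw)
      also have "\<dots> = M * norm z * (\<Sum>i<k. (1/2::real)^i)" by (simp add: sum_distrib_left)
      also have "(\<Sum>i<k. (1/2::real)^i) \<le> 2" by (simp add: sum_gp_strict)
      then have "M * norm z * (\<Sum>i<k. (1/2::real)^i) \<le> M * norm z * 2"
        using M0 by (intro mult_left_mono) auto
      finally show ?thesis by simp
    qed
    have "norm (suminf (\<lambda>i. f (w i))) \<le> 2 * M * norm z"
      by (rule LIMSEQ_le_const2[OF tendsto_norm[OF summable_LIMSEQ[OF summ]]]) (use bnd in auto)
    then show ?thesis using fz by simp
  qed
  then show ?thesis by blast
qed


lemma lop_zero: "is_lop G \<Longrightarrow> (0, 0) \<in> G" by (simp add: is_lop_def)
lemma lop_add: "is_lop G \<Longrightarrow> (x, y) \<in> G \<Longrightarrow> (a, y') \<in> G \<Longrightarrow> (x + a, y + y') \<in> G"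
  by (simp add: is_lop_def)
lemma lop_scale: "is_lop G \<Longrightarrow> (x, y) \<in> G \<Longrightarrow> (scaleC c x, scaleC c y) \<in> G"
  by (simp add: is_lop_def)
lemma lop_zero_sv: "is_lop G \<Longrightarrow> (0, y) \<in> G \<Longrightarrow> y = 0"
  by (simp add: is_lop_def)
lemma lop_neg: "is_lop G \<Longrightarrow> (x, y) \<in> G \<Longrightarrow> (- x, - y) \<in> G"
  using lop_scale[of G x y "-1"] by (simp add: scaleC_minus_one)
lemma lop_diff: "is_lop G \<Longrightarrow> (x, y) \<in> G \<Longrightarrow> (a, y') \<in> G \<Longrightarrow> (x - a, y - y') \<in> G"
  using lop_add[of G x y "- a" "- y'"] lop_neg[of G a y'] by simp
lemma lop_sv: "is_lop G \<Longrightarrow> (x, y) \<in> G \<Longrightarrow> (x, y') \<in> G \<Longrightarrow> y = y'"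
  using lop_diff[of G x y x y'] lop_zero_sv[of G "y - y'"] by simp
lemma lop_scaleR: "is_lop G \<Longrightarrow> (x, y) \<in> G \<Longrightarrow> (r *\<^sub>R x, r *\<^sub>R y) \<in> G"
  by (simp add: scaleR_scaleC lop_scale)

lemma is_lopI:
  assumes "(0, 0) \<in> G"
    and "\<And>x y a y'. (x, y) \<in> G \<Longrightarrow> (a, y') \<in> G \<Longrightarrow> (x + a, y + y') \<in> G"
    and "\<And>c x y. (x, y) \<in> G \<Longrightarrow> (scaleC c x, scaleC c y) \<in> G"
    and "\<And>y. (0, y) \<in> G \<Longrightarrow> y = 0"
  shows "is_lop G"
  using assms unfolding is_lop_def by blast

lemma is_lop_relcomp: "is_lop A \<Longrightarrow> is_lop B \<Longrightarrow> is_lop (A O B)"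
proof (rule is_lopI)
  assume A: "is_lop A" and B: "is_lop B"
  show "(0, 0) \<in> A O B" using lop_zero[OF A] lop_zero[OF B] by blast
  show "(x + a, z + z') \<in> A O B" if h1: "(x, z) \<in> A O B" and h2: "(a, z') \<in> A O B" for x z a z'
  proof -
    obtain y where "(x, y) \<in> A" "(y, z) \<in> B" using h1 by blast
    moreover obtain y' where "(a, y') \<in> A" "(y', z') \<in> B" using h2 by blast
    ultimately have "(x + a, y + y') \<in> A" "(y + y', z + z') \<in> B"
      using lop_add[OF A] lop_add[OF B] by blast+
    then show ?thesis by blast
  qed
  show "(scaleC c x, scaleC c z) \<in> A O B" if h1: "(x, z) \<in> A O B" for c x z
  proof -
    obtain y where "(x, y) \<in> A" "(y, z) \<in> B" using h1 by blast
    then have "(scaleC c x, scaleC c y) \<in> A" "(scaleC c y, scaleC c z) \<in> B"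
      using lop_scale[OF A] lop_scale[OF B] by blast+
    then show ?thesis by blast
  qed
  show "z = 0" if h1: "(0, z) \<in> A O B" for z
  proof -
    obtain y where y: "(0, y) \<in> A" "(y, z) \<in> B" using h1 by blast
    then have "y = 0" using lop_zero_sv[OF A] by blast
    then show ?thesis using y(2) lop_zero_sv[OF B] by blast
  qed
qed

lemma is_lop_lcomp: "is_lop A \<Longrightarrow> is_lop B \<Longrightarrow> is_lop (lcomp A B)"
  unfolding lcomp_def by (rule is_lop_relcomp)

lemma ldom_iff: "x \<in> ldom G \<longleftrightarrow> (\<exists>y. (x, y) \<in> G)"
  unfolding ldom_def by force

lemma lran_iff: "y \<in> lran G \<longleftrightarrow> (\<exists>x. (x, y) \<in> G)"
  unfolding lran_def by force

lemma ldom_add: "is_lop G \<Longrightarrow> x \<in> ldom G \<Longrightarrow> y \<in> ldom G \<Longrightarrow> x + y \<in> ldom G"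
  unfolding ldom_iff using lop_add by blast

lemma graph_lop:
  fixes F :: "'a::chilbert \<Rightarrow> 'b::chilbert"
  assumes add: "\<And>x y. F (x + y) = F x + F y" and sc: "\<And>c x. F (scaleC c x) = scaleC c (F x)"
  shows "is_lop {(x, F x) | x. True}"
proof (rule is_lopI)
  have F0: "F 0 = 0" using add[of 0 0] by simp
  then show "(0, 0) \<in> {(x, F x) | x. True}" by auto
  show "\<And>y. (0, y) \<in> {(x, F x) | x. True} \<Longrightarrow> y = 0" using F0 by auto
  show "(x + a, y + y') \<in> {(x, F x) | x. True}" if "(x, y) \<in> {(x, F x) | x. True}" "(a, y') \<in> {(x, F x) | x. True}" for x y a y'
    using that add by auto
  show "(scaleC c x, scaleC c y) \<in> {(x, F x) | x. True}" if "(x, y) \<in> {(x, F x) | x. True}" for c x y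
    using that sc by auto
qed

lemma closed_pairsI:
  fixes G :: "('a::metric_space \<times> 'b::metric_space) set"
  assumes "\<And>X x y. (\<forall>n. X n \<in> G) \<Longrightarrow> (\<lambda>n. fst (X n)) \<longlonglongrightarrow> x \<Longrightarrow> (\<lambda>n. snd (X n)) \<longlonglongrightarrow> y \<Longrightarrow> (x, y) \<in> G"
  shows "closed G"
  unfolding closed_sequential_limits
proof (intro allI impI, elim conjE)
  fix X l assume "\<forall>n. X n \<in> G" "X \<longlonglongrightarrow> l"
  then have "(\<lambda>n. fst (X n)) \<longlonglongrightarrow> fst l" "(\<lambda>n. snd (X n)) \<longlonglongrightarrow> snd l"
    by (auto intro: tendsto_fst tendsto_snd)
  then have "(fst l, snd l) \<in> G" using assms \<open>\<forall>n. X n \<in> G\<close> by blast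
  then show "l \<in> G" by simp
qed

lemma closure_pairsI:
  fixes G :: "('a::metric_space \<times> 'b::metric_space) set"
  assumes "\<forall>n. (X n, Y n) \<in> G" "X \<longlonglongrightarrow> x" "Y \<longlonglongrightarrow> y"
  shows "(x, y) \<in> closure G"
proof -
  have "(\<lambda>n. (X n, Y n)) \<longlonglongrightarrow> (x, y)" using assms by (intro tendsto_Pair)
  then show ?thesis unfolding closure_sequential using assms(1) by (intro exI[of _ "\<lambda>n. (X n, Y n)"]) simp
qed

lemma closed_pairsD:
  fixes G :: "('a::metric_space \<times> 'b::metric_space) set"
  assumes "closed G" "\<forall>n. (X n, Y n) \<in> G" "X \<longlonglongrightarrow> x" "Y \<longlonglongrightarrow> y"
  shows "(x, y) \<in> G"
  using closure_pairsI[OF assms(2-4)] assms(1) closure_closed by blast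

lemma graph_closed_adj:
  fixes F :: "'a::chilbert \<Rightarrow> 'b::chilbert"
  assumes adj: "\<And>v. \<exists>w. \<forall>x. cinner (F x) v = cinner x w"
  shows "\<And>X x y. X \<longlonglongrightarrow> x \<Longrightarrow> (\<lambda>n. F (X n)) \<longlonglongrightarrow> y \<Longrightarrow> F x = y"
proof -
  fix X x y assume X: "X \<longlonglongrightarrow> x" and FX: "(\<lambda>n. F (X n)) \<longlonglongrightarrow> y"
  have "cinner (F x - y) v = 0" for v
  proof -
    obtain w where w: "\<And>x. cinner (F x) v = cinner x w" using adj by blast
    have "(\<lambda>n. cinner (F (X n)) v) \<longlonglongrightarrow> cinner y v" by (intro tendsto_cinner FX tendsto_const)
    moreover have "(\<lambda>n. cinner (F (X n)) v) \<longlonglongrightarrow> cinner x w"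
      unfolding w by (intro tendsto_cinner X tendsto_const)
    ultimately have "cinner y v = cinner x w" using LIMSEQ_unique by blast
    then show ?thesis by (simp add: cinner_diff_left w)
  qed
  then have "F x - y = 0" by (rule cinner_ext)
  then show "F x = y" by simp
qed

lemma cgt_adj:
  fixes F :: "'a::chilbert \<Rightarrow> 'b::chilbert"
  assumes "\<And>x y. F (x + y) = F x + F y" "\<And>c x. F (scaleC c x) = scaleC c (F x)"
    and "\<And>v. \<exists>w. \<forall>x. cinner (F x) v = cinner x w"
  shows "\<exists>K. \<forall>x. norm (F x) \<le> K * norm x"
proof (rule cgt_fun)
  show "F (x + y) = F x + F y" for x y by (rule assms(1))
  show "F (r *\<^sub>R x) = r *\<^sub>R F x" for r x by (simp only: scaleR_scaleC assms(2))
  show "F x = y" if "X \<longlonglongrightarrow> x" "(\<lambda>n. F (X n)) \<longlonglongrightarrow> y" for X x y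
    by (rule graph_closed_adj[OF assms(3) that])
qed

lemma cgt_rel:
  fixes R :: "('a::chilbert \<times> 'b::chilbert) set"
  assumes lop: "is_lop R" and cl: "closed R" and tot: "\<And>x. \<exists>y. (x, y) \<in> R"
  shows "\<exists>K. \<forall>x y. (x, y) \<in> R \<longrightarrow> norm y \<le> K * norm x"
proof -
  define F where "F x = (THE y. (x, y) \<in> R)" for x
  have FR: "(x, F x) \<in> R" for x
    unfolding F_def by (rule theI') (use tot lop_sv[OF lop] in blast)
  have Fu: "(x, y) \<in> R \<Longrightarrow> F x = y" for x y using FR lop_sv[OF lop] by blast
  have "\<exists>K. \<forall>x. norm (F x) \<le> K * norm x"
  proof (rule cgt_fun)
    show "F (x + y) = F x + F y" for x y by (rule Fu, rule lop_add[OF lop FR FR])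
    show "F (r *\<^sub>R x) = r *\<^sub>R F x" for r x by (rule Fu, rule lop_scaleR[OF lop FR])
    show "F x = y" if "X \<longlonglongrightarrow> x" "(\<lambda>n. F (X n)) \<longlonglongrightarrow> y" for X x y
      by (rule Fu, rule closed_pairsD[OF cl _ that]) (simp add: FR)
  qed
  then obtain K where "\<And>x. norm (F x) \<le> K * norm x" by blast
  then show ?thesis using Fu by blast
qed

lemma bounded_relcomp:
  assumes "\<And>x y. (x, y) \<in> P \<Longrightarrow> norm y \<le> K1 * norm x"
    and "\<And>x y. (x, y) \<in> Q \<Longrightarrow> norm y \<le> K2 * norm x"
  shows "\<exists>K. \<forall>x z. (x, z) \<in> P O Q \<longrightarrow> norm z \<le> K * norm x"
proof (intro exI allI impI)
  fix x z assume "(x, z) \<in> P O Q"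
  then obtain y where y: "(x, y) \<in> P" "(y, z) \<in> Q" by blast
  have "K2 * norm y \<le> max K2 0 * norm y" by (intro mult_right_mono) auto
  then have "norm z \<le> max K2 0 * norm y" using assms(2)[OF y(2)] by linarith
  also have "K1 * norm x \<le> max K1 0 * norm x" by (intro mult_right_mono) auto
  then have "norm y \<le> max K1 0 * norm x" using assms(1)[OF y(1)] by linarith
  then have "max K2 0 * norm y \<le> max K2 0 * (max K1 0 * norm x)"
    by (intro mult_left_mono) auto
  finally show "norm z \<le> (max K2 0 * max K1 0) * norm x" by (simp add: mult.assoc)
qed

lemma closable_comp_closed:
  assumes Plop: "is_lop P" and Pb: "\<And>x y. (x, y) \<in> P \<Longrightarrow> norm y \<le> K * norm x"
    and Ptot: "\<And>x. \<exists>y. (x, y) \<in> P"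
    and Qc: "closable Q" and tot: "\<And>x. \<exists>z. (x, z) \<in> P O Q"
  shows "closed (P O Q)"
proof (rule closed_pairsI)
  fix S x z assume S: "\<forall>n. S n \<in> P O Q" and Sx: "(\<lambda>n. fst (S n)) \<longlonglongrightarrow> x"
    and Sz: "(\<lambda>n. snd (S n)) \<longlonglongrightarrow> z"
  have Qlop: "is_lop Q" and Qclop: "is_lop (closure Q)" using Qc by (auto simp: closable_def)
  define Y where "Y n = (SOME y. (fst (S n), y) \<in> P \<and> (y, snd (S n)) \<in> Q)" for n
  have Y: "(fst (S n), Y n) \<in> P \<and> (Y n, snd (S n)) \<in> Q" for n
  proof -
    have "\<exists>y. (fst (S n), y) \<in> P \<and> (y, snd (S n)) \<in> Q" using S[rule_format, of n]
      by (cases "S n") auto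
    then show ?thesis unfolding Y_def by (rule someI_ex)
  qed
  obtain y where y: "(x, y) \<in> P" using Ptot by blast
  have "Y \<longlonglongrightarrow> y"
  proof -
    have d: "norm (Y n - y) \<le> K * norm (fst (S n) - x)" for n
      using Pb[OF lop_diff[OF Plop conjunct1[OF Y[of n]] y]] .
    have "(\<lambda>n. K * norm (fst (S n) - x)) \<longlonglongrightarrow> K * norm (x - x)"
      by (intro tendsto_intros Sx)
    then have "(\<lambda>n. K * norm (fst (S n) - x)) \<longlonglongrightarrow> 0" by simp
    then have "(\<lambda>n. Y n - y) \<longlonglongrightarrow> 0"
      by (rule Lim_null_comparison[rotated]) (use d in \<open>intro always_eventually, blast\<close>)
    then show ?thesis by (simp add: LIM_zero_iff)
  qed
  then have yz: "(y, z) \<in> closure Q"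
    using Y Sz by (intro closure_pairsI[of Y "\<lambda>n. snd (S n)"]) auto
  obtain z' where "(x, z') \<in> P O Q" using tot by blast
  then obtain y' where y': "(x, y') \<in> P" "(y', z') \<in> Q" by blast
  have "y' = y" using lop_sv[OF Plop y'(1) y] .
  then have "(y, z') \<in> closure Q" using y'(2) closure_subset by blast
  then have "z = z'" using lop_sv[OF Qclop yz] by blast
  then show "(x, z) \<in> P O Q" using y' \<open>y' = y\<close> by blast
qed

lemma resD:
  assumes "l \<in> resolvent_set A"
  shows "lran (lshift A l) = UNIV" "\<And>x. (x, 0) \<in> lshift A l \<Longrightarrow> x = 0"
    "\<exists>K. \<forall>x y. (x, y) \<in> lshift A l \<longrightarrow> norm x \<le> K * norm y"
  using assms by (simp_all add: resolvent_set_def)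
lemma lshift_iff: "(a, b) \<in> lshift A l \<longleftrightarrow> (\<exists>y. (a, y) \<in> A \<and> b = y - scaleC l a)"
  unfolding lshift_def by blast

lemma bl_scaleC: "bounded_linear (scaleC c :: 'a::chilbert \<Rightarrow> 'a)"
proof (rule bounded_linear_intro)
  fix x y :: 'a and r :: real
  show "scaleC c (x + y) = scaleC c x + scaleC c y" by (rule scaleC_add_right)
  show "scaleC c (r *\<^sub>R x) = r *\<^sub>R scaleC c x" by (simp only: scaleR_scaleC scaleC_scaleC mult.commute)
  show "norm (scaleC c x) \<le> norm x * cmod c"
    by (simp add: norm_scaleC mult.commute)
qed

lemmas tendsto_scaleC = bounded_linear.tendsto[OF bl_scaleC]

lemma resolvent_closed:
  assumes lop: "is_lop A" and res: "l \<in> resolvent_set A"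
  shows "closed A"
proof (rule closed_pairsI)
  fix S x y assume S: "\<forall>n. S n \<in> A" and Sx: "(\<lambda>n. fst (S n)) \<longlonglongrightarrow> x"
    and Sy: "(\<lambda>n. snd (S n)) \<longlonglongrightarrow> y"
  obtain K where K: "\<And>a b. (a, b) \<in> lshift A l \<Longrightarrow> norm a \<le> K * norm b"
    using resD(3)[OF res] by blast
  have surj: "lran (lshift A l) = UNIV" by (rule resD(1)[OF res])
  have "y - scaleC l x \<in> lran (lshift A l)" using surj by simp
  then obtain a where "(a, y - scaleC l x) \<in> lshift A l" unfolding lran_iff by blast
  then obtain y' where xy': "(a, y') \<in> A" "y - scaleC l x = y' - scaleC l a"
    unfolding lshift_iff by blast
  have d: "norm (fst (S n) - a) \<le> K * norm ((snd (S n) - scaleC l (fst (S n))) - (y - scaleC l x))" for n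
  proof -
    have Sn: "(fst (S n), snd (S n)) \<in> A" using S by simp
    have "(fst (S n) - a, snd (S n) - y') \<in> A" by (rule lop_diff[OF lop Sn xy'(1)])
    then have "(fst (S n) - a, (snd (S n) - y') - scaleC l (fst (S n) - a)) \<in> lshift A l"
      unfolding lshift_iff by blast
    moreover have "(snd (S n) - y') - scaleC l (fst (S n) - a) = (snd (S n) - scaleC l (fst (S n))) - (y' - scaleC l a)"
      by (simp add: scaleC_diff_right algebra_simps)
    ultimately have "(fst (S n) - a, (snd (S n) - scaleC l (fst (S n))) - (y - scaleC l x)) \<in> lshift A l"
      unfolding xy'(2) by simp
    then show ?thesis by (rule K)
  qed
  have lim1: "(\<lambda>n. snd (S n) - scaleC l (fst (S n))) \<longlonglongrightarrow> y - scaleC l x"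
    by (intro tendsto_diff Sy tendsto_scaleC Sx)
  have "(\<lambda>n. K * norm ((snd (S n) - scaleC l (fst (S n))) - (y - scaleC l x))) \<longlonglongrightarrow> K * norm ((y - scaleC l x) - (y - scaleC l x))"
    by (intro tendsto_intros lim1)
  then have "(\<lambda>n. K * norm ((snd (S n) - scaleC l (fst (S n))) - (y - scaleC l x))) \<longlonglongrightarrow> 0" by simp
  then have "(\<lambda>n. fst (S n) - a) \<longlonglongrightarrow> 0"
    by (rule Lim_null_comparison[rotated]) (use d in \<open>intro always_eventually, blast\<close>)
  then have "(\<lambda>n. fst (S n)) \<longlonglongrightarrow> a" by (simp add: LIM_zero_iff)
  then have "x = a" using Sx LIMSEQ_unique by blast
  then have "y = y'" using xy'(2) by simp
  then show "(x, y) \<in> A" using xy'(1) \<open>x = a\<close> by simp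
qed


locale half =
  fixes T :: "('h::chilbert \<times> 'h) set" and G0 :: "'h \<Rightarrow> 'g::chilbert"
  assumes T_lop: "is_lop T" and G0_lin: "clinear_on (ldom T) G0" and G0_ran: "G0 ` ldom T = UNIV"
begin

lemma inT_dom: "(f, y) \<in> T \<Longrightarrow> f \<in> ldom T" by (auto simp: ldom_iff)

lemma G0_add: "(f, a) \<in> T \<Longrightarrow> (f', b) \<in> T \<Longrightarrow> G0 (f + f') = G0 f + G0 f'"
  using G0_lin inT_dom unfolding clinear_on_def by blast

lemma G0_scale: "(f, a) \<in> T \<Longrightarrow> G0 (scaleC c f) = scaleC c (G0 f)"
  using G0_lin inT_dom unfolding clinear_on_def by blast

lemma G0_zero: "G0 0 = 0"
  using G0_add[OF lop_zero[OF T_lop] lop_zero[OF T_lop]] by simp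

lemma G0_diff: "(f, a) \<in> T \<Longrightarrow> (f', b) \<in> T \<Longrightarrow> G0 (f - f') = G0 f - G0 f'"
proof -
  assume h: "(f, a) \<in> T" "(f', b) \<in> T"
  have "(f - f', a - b) \<in> T" by (rule lop_diff[OF T_lop h])
  then have "G0 (f - f') + G0 f' = G0 f" using G0_add[OF _ h(2)] by fastforce
  then show ?thesis by (simp add: algebra_simps eq_diff_eq)
qed

definition wres :: "complex \<Rightarrow> bool" where
  "wres l \<longleftrightarrow> (\<forall>h. \<exists>f. (f, h + scaleC l f) \<in> T \<and> G0 f = 0)
     \<and> (\<forall>f. (f, scaleC l f) \<in> T \<and> G0 f = 0 \<longrightarrow> f = 0)"

lemma wres_res:
  assumes "l \<in> resolvent_set (ker_restr T G0)"
  shows "wres l"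
  unfolding wres_def
proof (intro conjI allI impI)
  fix h
  have "h \<in> lran (lshift (ker_restr T G0) l)" using resD(1)[OF assms] by simp
  then obtain a where "(a, h) \<in> lshift (ker_restr T G0) l" unfolding lran_iff by blast
  then obtain y where "(a, y) \<in> ker_restr T G0" "h = y - scaleC l a" unfolding lshift_iff by blast
  then have "(a, h + scaleC l a) \<in> T \<and> G0 a = 0" by (simp add: ker_restr_def)
  then show "\<exists>f. (f, h + scaleC l f) \<in> T \<and> G0 f = 0" by blast
next
  fix f assume "(f, scaleC l f) \<in> T \<and> G0 f = 0"
  then have "(f, scaleC l f) \<in> ker_restr T G0" by (simp add: ker_restr_def)
  then have "(f, 0) \<in> lshift (ker_restr T G0) l" unfolding lshift_iff by force
  then show "f = 0" by (rule resD(2)[OF assms])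
qed

lemma wres_inj: "wres l \<Longrightarrow> (f, scaleC l f) \<in> T \<Longrightarrow> G0 f = 0 \<Longrightarrow> f = 0"
  unfolding wres_def by blast

lemma kernel_diff:
  assumes "(f, h + scaleC l f) \<in> T" "(f', h' + scaleC l f') \<in> T"
  shows "(f - f', (h - h') + scaleC l (f - f')) \<in> T"
proof -
  have "(f - f', (h + scaleC l f) - (h' + scaleC l f')) \<in> T" by (rule lop_diff[OF T_lop assms])
  moreover have "(h + scaleC l f) - (h' + scaleC l f') = (h - h') + scaleC l (f - f')"
    by (simp add: scaleC_diff_right algebra_simps)
  ultimately show ?thesis by simp
qed

definition R0 :: "complex \<Rightarrow> 'h \<Rightarrow> 'h" where
  "R0 l h = (THE f. (f, h + scaleC l f) \<in> T \<and> G0 f = 0)"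

lemma R0_uniq:
  assumes w: "wres l" and "(f, h + scaleC l f) \<in> T" "G0 f = 0" "(f', h + scaleC l f') \<in> T" "G0 f' = 0"
  shows "f = f'"
proof -
  have "(f - f', (h - h) + scaleC l (f - f')) \<in> T" by (rule kernel_diff[OF assms(2,4)])
  then have 1: "(f - f', scaleC l (f - f')) \<in> T" by simp
  have "G0 (f - f') = 0" using G0_diff[OF assms(2,4)] assms(3,5) by simp
  then have "f - f' = 0" by (rule wres_inj[OF w 1])
  then show ?thesis by simp
qed

lemma R0_prop:
  assumes w: "wres l"
  shows "(R0 l h, h + scaleC l (R0 l h)) \<in> T" "G0 (R0 l h) = 0"
proof -
  have ex: "\<exists>f. (f, h + scaleC l f) \<in> T \<and> G0 f = 0" using w unfolding wres_def by blast
  have "(R0 l h, h + scaleC l (R0 l h)) \<in> T \<and> G0 (R0 l h) = 0"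
    unfolding R0_def by (rule theI') (use ex R0_uniq[OF w] in blast)
  then show "(R0 l h, h + scaleC l (R0 l h)) \<in> T" "G0 (R0 l h) = 0" by auto
qed

lemma R0_eq:
  assumes w: "wres l" and "(f, h + scaleC l f) \<in> T" "G0 f = 0"
  shows "R0 l h = f"
  using R0_uniq[OF w R0_prop[OF w] assms(2,3)] .

lemma R0_dom: "wres l \<Longrightarrow> R0 l h \<in> ldom T"
  using R0_prop(1) inT_dom by blast

lemma R0_add: assumes w: "wres l" shows "R0 l (h + h') = R0 l h + R0 l h'"
proof (rule R0_eq[OF w])
  have "(R0 l h + R0 l h', (h + scaleC l (R0 l h)) + (h' + scaleC l (R0 l h'))) \<in> T"
    by (rule lop_add[OF T_lop R0_prop(1)[OF w] R0_prop(1)[OF w]])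
  then show "(R0 l h + R0 l h', h + h' + scaleC l (R0 l h + R0 l h')) \<in> T"
    by (simp add: scaleC_add_right algebra_simps)
  show "G0 (R0 l h + R0 l h') = 0"
    using G0_add[OF R0_prop(1)[OF w] R0_prop(1)[OF w]] R0_prop(2)[OF w] by simp
qed

lemma R0_scale: assumes w: "wres l" shows "R0 l (scaleC c h) = scaleC c (R0 l h)"
proof (rule R0_eq[OF w])
  have "(scaleC c (R0 l h), scaleC c (h + scaleC l (R0 l h))) \<in> T"
    by (rule lop_scale[OF T_lop R0_prop(1)[OF w]])
  then show "(scaleC c (R0 l h), scaleC c h + scaleC l (scaleC c (R0 l h))) \<in> T"
    by (simp add: scaleC_add_right scaleC_scaleC mult.commute)
  show "G0 (scaleC c (R0 l h)) = 0"
    using G0_scale[OF R0_prop(1)[OF w]] R0_prop(2)[OF w] by simp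
qed

lemma conv_A0:
  assumes w: "wres l"
  shows "converse (lshift (ker_restr T G0) l) = {(h, R0 l h) | h. True}"
proof (intro set_eqI iffI)
  fix p assume "p \<in> converse (lshift (ker_restr T G0) l)"
  then obtain h f where p: "p = (h, f)" "(f, h) \<in> lshift (ker_restr T G0) l" by (cases p) auto
  then obtain y where "(f, y) \<in> ker_restr T G0" "h = y - scaleC l f" unfolding lshift_iff by blast
  then have "(f, h + scaleC l f) \<in> T" "G0 f = 0" by (auto simp: ker_restr_def)
  then have "R0 l h = f" by (rule R0_eq[OF w])
  then show "p \<in> {(h, R0 l h) | h. True}" using p by auto
next
  fix p assume "p \<in> {(h, R0 l h) | h. True}"
  then obtain h where p: "p = (h, R0 l h)" by blast
  have "(R0 l h, h + scaleC l (R0 l h)) \<in> ker_restr T G0"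
    using R0_prop[OF w] by (simp add: ker_restr_def)
  then have "(R0 l h, h) \<in> lshift (ker_restr T G0) l" unfolding lshift_iff by force
  then show "p \<in> converse (lshift (ker_restr T G0) l)" using p by simp
qed

lemma R0_bound:
  assumes "l \<in> resolvent_set (ker_restr T G0)"
  shows "\<exists>K. \<forall>h. norm (R0 l h) \<le> K * norm h"
proof -
  have w: "wres l" by (rule wres_res[OF assms])
  obtain K where K: "\<And>x y. (x, y) \<in> lshift (ker_restr T G0) l \<Longrightarrow> norm x \<le> K * norm y"
    using resD(3)[OF assms] by blast
  have "(R0 l h, h) \<in> lshift (ker_restr T G0) l" for h
    using conv_A0[OF w] by blast
  then show ?thesis using K by blast
qed

definition gam :: "complex \<Rightarrow> 'g \<Rightarrow> 'h" where
  "gam l \<phi> = (THE f. (f, scaleC l f) \<in> T \<and> G0 f = \<phi>)"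

lemma gam_uniq:
  assumes w: "wres l" and "(f, scaleC l f) \<in> T" "G0 f = \<phi>" "(f', scaleC l f') \<in> T" "G0 f' = \<phi>"
  shows "f = f'"
proof -
  have "(f - f', scaleC l f - scaleC l f') \<in> T" by (rule lop_diff[OF T_lop assms(2,4)])
  then have 1: "(f - f', scaleC l (f - f')) \<in> T" by (simp add: scaleC_diff_right)
  have "G0 (f - f') = 0" using G0_diff[OF assms(2,4)] assms(3,5) by simp
  then have "f - f' = 0" by (rule wres_inj[OF w 1])
  then show ?thesis by simp
qed

lemma decomp:
  assumes w: "wres l" and xy: "(x, y) \<in> T"
  shows "(x - R0 l (y - scaleC l x), scaleC l (x - R0 l (y - scaleC l x))) \<in> T"
    "G0 (x - R0 l (y - scaleC l x)) = G0 x"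
proof -
  define f0 where "f0 = R0 l (y - scaleC l x)"
  have f0: "(f0, (y - scaleC l x) + scaleC l f0) \<in> T" "G0 f0 = 0"
    unfolding f0_def by (rule R0_prop[OF w])+
  have "(x - f0, y - ((y - scaleC l x) + scaleC l f0)) \<in> T" by (rule lop_diff[OF T_lop xy f0(1)])
  moreover have "y - ((y - scaleC l x) + scaleC l f0) = scaleC l (x - f0)"
    by (simp add: scaleC_diff_right)
  ultimately show "(x - R0 l (y - scaleC l x), scaleC l (x - R0 l (y - scaleC l x))) \<in> T"
    unfolding f0_def by simp
  show "G0 (x - R0 l (y - scaleC l x)) = G0 x"
    using G0_diff[OF xy f0(1)] f0(2) unfolding f0_def by simp
qed

lemma gam_prop:
  assumes w: "wres l"
  shows "(gam l \<phi>, scaleC l (gam l \<phi>)) \<in> T" "G0 (gam l \<phi>) = \<phi>"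
proof -
  obtain x where x: "x \<in> ldom T" "G0 x = \<phi>" using G0_ran by (metis UNIV_I imageE)
  then obtain y where xy: "(x, y) \<in> T" unfolding ldom_iff by blast
  have ex: "\<exists>f. (f, scaleC l f) \<in> T \<and> G0 f = \<phi>" using decomp[OF w xy] x(2) by blast
  have "(gam l \<phi>, scaleC l (gam l \<phi>)) \<in> T \<and> G0 (gam l \<phi>) = \<phi>"
    unfolding gam_def by (rule theI') (use ex gam_uniq[OF w] in blast)
  then show "(gam l \<phi>, scaleC l (gam l \<phi>)) \<in> T" "G0 (gam l \<phi>) = \<phi>" by auto
qed

lemma gam_eq:
  assumes w: "wres l" and "(f, scaleC l f) \<in> T"
  shows "gam l (G0 f) = f"
  using gam_uniq[OF w gam_prop[OF w] assms(2) refl] by simp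

lemma gam_add: assumes w: "wres l" shows "gam l (\<phi> + \<psi>) = gam l \<phi> + gam l \<psi>"
proof -
  have "(gam l \<phi> + gam l \<psi>, scaleC l (gam l \<phi>) + scaleC l (gam l \<psi>)) \<in> T"
    by (rule lop_add[OF T_lop gam_prop(1)[OF w] gam_prop(1)[OF w]])
  then have 1: "(gam l \<phi> + gam l \<psi>, scaleC l (gam l \<phi> + gam l \<psi>)) \<in> T"
    by (simp add: scaleC_add_right)
  have "G0 (gam l \<phi> + gam l \<psi>) = \<phi> + \<psi>"
    using G0_add[OF gam_prop(1)[OF w] gam_prop(1)[OF w]] gam_prop(2)[OF w] by simp
  then show ?thesis using gam_eq[OF w 1] by simp
qed

lemma gam_scale: assumes w: "wres l" shows "gam l (scaleC c \<phi>) = scaleC c (gam l \<phi>)"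
proof -
  have "(scaleC c (gam l \<phi>), scaleC c (scaleC l (gam l \<phi>))) \<in> T"
    by (rule lop_scale[OF T_lop gam_prop(1)[OF w]])
  then have 1: "(scaleC c (gam l \<phi>), scaleC l (scaleC c (gam l \<phi>))) \<in> T"
    by (simp add: scaleC_scaleC mult.commute)
  have "G0 (scaleC c (gam l \<phi>)) = scaleC c \<phi>"
    using G0_scale[OF gam_prop(1)[OF w]] gam_prop(2)[OF w] by simp
  then show ?thesis using gam_eq[OF w 1] by simp
qed

lemma gam_dom: "wres l \<Longrightarrow> gam l \<phi> \<in> ldom T"
  using gam_prop(1) inT_dom by blast

lemma gamma_field_eq:
  assumes w: "wres l"
  shows "gamma_field T G0 l = {(\<phi>, gam l \<phi>) | \<phi>. True}"
proof (intro set_eqI iffI)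
  fix p assume "p \<in> gamma_field T G0 l"
  then obtain f where p: "p = (G0 f, f)" "(f, scaleC l f) \<in> T" unfolding gamma_field_def by blast
  then show "p \<in> {(\<phi>, gam l \<phi>) | \<phi>. True}" using gam_eq[OF w p(2)] by auto
next
  fix p assume "p \<in> {(\<phi>, gam l \<phi>) | \<phi>. True}"
  then obtain \<phi> where p: "p = (\<phi>, gam l \<phi>)" by blast
  show "p \<in> gamma_field T G0 l" unfolding gamma_field_def p
    using gam_prop[OF w, of \<phi>] by force
qed

end


lemma graph_closed:
  fixes F :: "'a::metric_space \<Rightarrow> 'b::metric_space"
  assumes "\<And>X x y. X \<longlonglongrightarrow> x \<Longrightarrow> (\<lambda>n. F (X n)) \<longlonglongrightarrow> y \<Longrightarrow> F x = y"
  shows "closed {(x, F x) | x. True}"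
proof (rule closed_pairsI)
  fix S x y assume S: "\<forall>n. S n \<in> {(x, F x) | x. True}" and Sx: "(\<lambda>n. fst (S n)) \<longlonglongrightarrow> x"
    and Sy: "(\<lambda>n. snd (S n)) \<longlonglongrightarrow> y"
  have "snd (S n) = F (fst (S n))" for n
  proof -
    obtain x where "S n = (x, F x)" using S by blast
    then show ?thesis by simp
  qed
  then have "(\<lambda>n. F (fst (S n))) \<longlonglongrightarrow> y" using Sy by simp
  then have "F x = y" by (rule assms[OF Sx])
  then show "(x, y) \<in> {(x, F x) | x. True}" by auto
qed

locale triple = T: half T G0 + Tt: half Tt Gt0
  for T :: "('h::chilbert \<times> 'h) set" and G0 :: "'h \<Rightarrow> 'g::chilbert"
    and Tt :: "('h \<times> 'h) set" and Gt0 :: "'h \<Rightarrow> 'g" +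
  fixes G1 Gt1 :: "'h \<Rightarrow> 'g"
  assumes G1_lin: "clinear_on (ldom T) G1" and Gt1_lin: "clinear_on (ldom Tt) Gt1"
    and Green: "\<forall>f Tf g Ttg. (f, Tf) \<in> T \<longrightarrow> (g, Ttg) \<in> Tt \<longrightarrow>
                  cinner Tf g - cinner f Ttg = cinner (G1 f) (Gt0 g) - cinner (G0 f) (Gt1 g)"
    and Mc: "ladj (ker_restr T G0) = ker_restr Tt Gt0"
begin

lemma G1_add: "(f, a) \<in> T \<Longrightarrow> (f', b) \<in> T \<Longrightarrow> G1 (f + f') = G1 f + G1 f'"
  using G1_lin T.inT_dom unfolding clinear_on_def by blast

lemma G1_scale: "(f, a) \<in> T \<Longrightarrow> G1 (scaleC c f) = scaleC c (G1 f)"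
  using G1_lin T.inT_dom unfolding clinear_on_def by blast

lemma G1_diff: "(f, a) \<in> T \<Longrightarrow> (f', b) \<in> T \<Longrightarrow> G1 (f - f') = G1 f - G1 f'"
proof -
  assume h: "(f, a) \<in> T" "(f', b) \<in> T"
  have "(f - f', a - b) \<in> T" by (rule lop_diff[OF T.T_lop h])
  then have "G1 (f - f') + G1 f' = G1 f" using G1_add[OF _ h(2)] by fastforce
  then show ?thesis by (simp add: algebra_simps eq_diff_eq)
qed

lemma wres_tilde:
  assumes res: "l \<in> resolvent_set (ker_restr T G0)"
  shows "Tt.wres (cnj l)"
proof -
  have w: "T.wres l" by (rule T.wres_res[OF res])
  obtain K where K: "\<And>h. norm (T.R0 l h) \<le> K * norm h" using T.R0_bound[OF res] by blast
  have R0_of: "T.R0 l (y - scaleC l f) = f" if "(f, y) \<in> ker_restr T G0" for f y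
    using that by (intro T.R0_eq[OF w]) (auto simp: ker_restr_def)
  have surj: "\<exists>g. (g, k + scaleC (cnj l) g) \<in> Tt \<and> Gt0 g = 0" for k
  proof -
    have "\<exists>g. \<forall>z. cinner (T.R0 l z) k = cinner z g"
    proof (rule riesz)
      show "cinner (T.R0 l (x + y)) k = cinner (T.R0 l x) k + cinner (T.R0 l y) k" for x y
        by (simp add: T.R0_add[OF w] cinner_add_left)
      show "cinner (T.R0 l (scaleC c x)) k = c * cinner (T.R0 l x) k" for c x
        by (simp add: T.R0_scale[OF w] cinner_scaleC_left)
      show "cmod (cinner (T.R0 l x) k) \<le> (K * norm k) * norm x" for x
      proof -
        have "cmod (cinner (T.R0 l x) k) \<le> norm (T.R0 l x) * norm k" by (rule cauchy_schwarz)
        also have "\<dots> \<le> (K * norm x) * norm k" by (intro mult_right_mono K) simp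
        finally show ?thesis by (simp add: mult_ac)
      qed
    qed
    then obtain g where g: "\<And>z. cinner (T.R0 l z) k = cinner z g" by blast
    have "(g, k + scaleC (cnj l) g) \<in> ladj (ker_restr T G0)"
      unfolding ladj_def
    proof (clarsimp)
      fix f y assume fy: "(f, y) \<in> ker_restr T G0"
      have "cinner f k = cinner (y - scaleC l f) g" using g[of "y - scaleC l f"] R0_of[OF fy] by simp
      then show "cinner y g = cinner f (k + scaleC (cnj l) g)"
        by (simp add: cinner_add_right cinner_scaleC_right cinner_diff_left cinner_scaleC_left)
    qed
    then show ?thesis unfolding Mc by (auto simp: ker_restr_def)
  qed
  have inj: "g = 0" if "(g, scaleC (cnj l) g) \<in> Tt" "Gt0 g = 0" for g
  proof -
    have "(g, scaleC (cnj l) g) \<in> ladj (ker_restr T G0)" unfolding Mc using that by (simp add: ker_restr_def)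
    then have adj: "\<And>f y. (f, y) \<in> ker_restr T G0 \<Longrightarrow> cinner y g = cinner f (scaleC (cnj l) g)"
      unfolding ladj_def by blast
    have "cinner z g = 0" for z
    proof -
      have "(T.R0 l z, z + scaleC l (T.R0 l z)) \<in> ker_restr T G0"
        using T.R0_prop[OF w] by (simp add: ker_restr_def)
      from adj[OF this] show ?thesis
        by (simp add: cinner_add_left cinner_scaleC_left cinner_scaleC_right)
    qed
    then show ?thesis by (rule cinner_ext_right)
  qed
  show ?thesis unfolding Tt.wres_def using surj inj by blast
qed

lemma green_gs:
  assumes res: "l \<in> resolvent_set (ker_restr T G0)"
  shows "cinner (Tt.gam (cnj l) \<phi>) h = cinner \<phi> (G1 (T.R0 l h))"
proof -
  have w: "T.wres l" by (rule T.wres_res[OF res])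
  have wt: "Tt.wres (cnj l)" by (rule wres_tilde[OF res])
  define f0 where "f0 = T.R0 l h"
  define g where "g = Tt.gam (cnj l) \<phi>"
  have f0: "(f0, h + scaleC l f0) \<in> T" "G0 f0 = 0" unfolding f0_def by (rule T.R0_prop[OF w])+
  have g: "(g, scaleC (cnj l) g) \<in> Tt" "Gt0 g = \<phi>" unfolding g_def by (rule Tt.gam_prop[OF wt])+
  have "cinner (h + scaleC l f0) g - cinner f0 (scaleC (cnj l) g) = cinner (G1 f0) \<phi> - cinner (G0 f0) (Gt1 g)"
    using Green f0(1) g by auto
  then have "cinner h g = cinner (G1 f0) \<phi>"
    using f0(2) by (simp add: cinner_add_left cinner_scaleC_left cinner_scaleC_right)
  then have "cnj (cinner h g) = cnj (cinner (G1 f0) \<phi>)" by simp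
  then show ?thesis unfolding g_def[symmetric] f0_def[symmetric]
    by (simp add: cinner_commute[of h g] cinner_commute[of "G1 f0" \<phi>])
qed

lemma green_gam:
  assumes res: "l \<in> resolvent_set (ker_restr T G0)"
  shows "cinner (T.gam l \<phi>) h = cinner \<phi> (Gt1 (Tt.R0 (cnj l) h))"
proof -
  have w: "T.wres l" by (rule T.wres_res[OF res])
  have wt: "Tt.wres (cnj l)" by (rule wres_tilde[OF res])
  define f where "f = T.gam l \<phi>"
  define g0 where "g0 = Tt.R0 (cnj l) h"
  have f: "(f, scaleC l f) \<in> T" "G0 f = \<phi>" unfolding f_def by (rule T.gam_prop[OF w])+
  have g0: "(g0, h + scaleC (cnj l) g0) \<in> Tt" "Gt0 g0 = 0" unfolding g0_def by (rule Tt.R0_prop[OF wt])+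
  have "cinner (scaleC l f) g0 - cinner f (h + scaleC (cnj l) g0) = cinner (G1 f) (Gt0 g0) - cinner (G0 f) (Gt1 g0)"
    using Green f(1) g0(1) by auto
  then show ?thesis unfolding f_def[symmetric] g0_def[symmetric]
    using f(2) g0(2) by (simp add: cinner_add_right cinner_scaleC_left cinner_scaleC_right)
qed

lemma green_M:
  assumes res: "l \<in> resolvent_set (ker_restr T G0)"
  shows "cinner (G1 (T.gam l \<phi>)) \<psi> = cinner \<phi> (Gt1 (Tt.gam (cnj l) \<psi>))"
proof -
  have w: "T.wres l" by (rule T.wres_res[OF res])
  have wt: "Tt.wres (cnj l)" by (rule wres_tilde[OF res])
  define f where "f = T.gam l \<phi>"
  define g where "g = Tt.gam (cnj l) \<psi>"
  have f: "(f, scaleC l f) \<in> T" "G0 f = \<phi>" unfolding f_def by (rule T.gam_prop[OF w])+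
  have g: "(g, scaleC (cnj l) g) \<in> Tt" "Gt0 g = \<psi>" unfolding g_def by (rule Tt.gam_prop[OF wt])+
  have "cinner (scaleC l f) g - cinner f (scaleC (cnj l) g) = cinner (G1 f) (Gt0 g) - cinner (G0 f) (Gt1 g)"
    using Green f(1) g(1) by auto
  then show ?thesis unfolding f_def[symmetric] g_def[symmetric]
    using f(2) g(2) by (simp add: cinner_scaleC_left cinner_scaleC_right)
qed

end

context triple begin

lemma Gs_eq:
  assumes res: "l \<in> resolvent_set (ker_restr T G0)"
  shows "ladj (gamma_field Tt Gt0 (cnj l)) = {(h, G1 (T.R0 l h)) | h. True}"
proof -
  have wt: "Tt.wres (cnj l)" by (rule wres_tilde[OF res])
  show ?thesis
  proof (intro set_eqI iffI)
    fix p assume "p \<in> ladj (gamma_field Tt Gt0 (cnj l))"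
    then obtain h k where p: "p = (h, k)" and adj: "\<And>\<phi>. cinner (Tt.gam (cnj l) \<phi>) h = cinner \<phi> k"
      unfolding Tt.gamma_field_eq[OF wt] ladj_def by (cases p) auto
    have "cinner \<phi> (k - G1 (T.R0 l h)) = 0" for \<phi>
      using adj[of \<phi>] green_gs[OF res, of \<phi> h] by (simp add: cinner_diff_right)
    then have "k - G1 (T.R0 l h) = 0" by (rule cinner_ext_right)
    then show "p \<in> {(h, G1 (T.R0 l h)) | h. True}" using p by auto
  next
    fix p assume "p \<in> {(h, G1 (T.R0 l h)) | h. True}"
    then obtain h where p: "p = (h, G1 (T.R0 l h))" by blast
    show "p \<in> ladj (gamma_field Tt Gt0 (cnj l))"
      unfolding Tt.gamma_field_eq[OF wt] ladj_def p using green_gs[OF res] by auto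
  qed
qed

lemma weyl_eq:
  assumes w: "T.wres l"
  shows "weyl T G0 G1 l = {(\<phi>, G1 (T.gam l \<phi>)) | \<phi>. True}"
  unfolding weyl_def lcomp_def T.gamma_field_eq[OF w] using T.gam_dom[OF w] by auto

lemma gam_bounded:
  assumes res: "l \<in> resolvent_set (ker_restr T G0)"
  shows "\<exists>K. \<forall>\<phi>. norm (T.gam l \<phi>) \<le> K * norm \<phi>"
proof -
  have w: "T.wres l" by (rule T.wres_res[OF res])
  show ?thesis
  proof (rule cgt_adj)
    show "T.gam l (x + y) = T.gam l x + T.gam l y" for x y by (rule T.gam_add[OF w])
    show "T.gam l (scaleC c x) = scaleC c (T.gam l x)" for c x by (rule T.gam_scale[OF w])
    show "\<exists>w. \<forall>x. cinner (T.gam l x) v = cinner x w" for v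
      using green_gam[OF res] by blast
  qed
qed

lemma E1_bounded:
  assumes res: "l \<in> resolvent_set (ker_restr T G0)"
  shows "\<exists>K. \<forall>h. norm (G1 (T.R0 l h)) \<le> K * norm h"
proof -
  have w: "T.wres l" by (rule T.wres_res[OF res])
  show ?thesis
  proof (rule cgt_adj)
    show "G1 (T.R0 l (x + y)) = G1 (T.R0 l x) + G1 (T.R0 l y)" for x y
      unfolding T.R0_add[OF w] by (rule G1_add[OF T.R0_prop(1)[OF w] T.R0_prop(1)[OF w]])
    show "G1 (T.R0 l (scaleC c x)) = scaleC c (G1 (T.R0 l x))" for c x
      unfolding T.R0_scale[OF w] by (rule G1_scale[OF T.R0_prop(1)[OF w]])
    show "\<exists>w. \<forall>x. cinner (G1 (T.R0 l x)) v = cinner x w" for v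
    proof (intro exI allI)
      fix x
      have "cinner (Tt.gam (cnj l) v) x = cinner v (G1 (T.R0 l x))" by (rule green_gs[OF res])
      then show "cinner (G1 (T.R0 l x)) v = cinner x (Tt.gam (cnj l) v)"
        by (metis cinner_commute)
    qed
  qed
qed

lemma weyl_closed:
  assumes res: "l \<in> resolvent_set (ker_restr T G0)"
  shows "closed (weyl T G0 G1 l)" "is_lop (weyl T G0 G1 l)"
proof -
  have w: "T.wres l" by (rule T.wres_res[OF res])
  have adj: "\<exists>w. \<forall>x. cinner (G1 (T.gam l x)) v = cinner x w" for v
    using green_M[OF res] by blast
  show "closed (weyl T G0 G1 l)" unfolding weyl_eq[OF w]
    by (rule graph_closed, rule graph_closed_adj[OF adj])
  show "is_lop (weyl T G0 G1 l)" unfolding weyl_eq[OF w]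
  proof (rule graph_lop)
    show "G1 (T.gam l (x + y)) = G1 (T.gam l x) + G1 (T.gam l y)" for x y
      unfolding T.gam_add[OF w] by (rule G1_add[OF T.gam_prop(1)[OF w] T.gam_prop(1)[OF w]])
    show "G1 (T.gam l (scaleC c x)) = scaleC c (G1 (T.gam l x))" for c x
      unfolding T.gam_scale[OF w] by (rule G1_scale[OF T.gam_prop(1)[OF w]])
  qed
qed

end

context triple begin

lemma A_ext_iff: "(f, y) \<in> A_ext T G0 G1 B \<longleftrightarrow> (f, y) \<in> T \<and> (G1 f, G0 f) \<in> B"
  by (simp add: A_ext_def)

lemma chain_sol:
  assumes res: "l \<in> resolvent_set (ker_restr T G0)" and B2: "is_lop B2"
    and h1: "(G1 (T.R0 l h), \<psi>) \<in> B2" and h2: "(\<xi>, \<phi>) \<in> B1"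
    and h3: "(G1 (T.gam l \<phi>), y) \<in> B2" and h4: "\<psi> = \<xi> - y"
  shows "(h, T.R0 l h + T.gam l \<phi>) \<in> converse (lshift (A_ext T G0 G1 (lcomp B1 B2)) l)"
proof -
  have w: "T.wres l" by (rule T.wres_res[OF res])
  define f0 where "f0 = T.R0 l h"
  define z where "z = T.gam l \<phi>"
  have f0: "(f0, h + scaleC l f0) \<in> T" "G0 f0 = 0" unfolding f0_def by (rule T.R0_prop[OF w])+
  have z: "(z, scaleC l z) \<in> T" "G0 z = \<phi>" unfolding z_def by (rule T.gam_prop[OF w])+
  have "(f0 + z, (h + scaleC l f0) + scaleC l z) \<in> T" by (rule lop_add[OF T.T_lop f0(1) z(1)])
  then have fT: "(f0 + z, h + scaleC l (f0 + z)) \<in> T" by (simp add: scaleC_add_right add.assoc)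
  have G0f: "G0 (f0 + z) = \<phi>" using T.G0_add[OF f0(1) z(1)] f0(2) z(2) by simp
  have G1f: "G1 (f0 + z) = G1 f0 + G1 z" by (rule G1_add[OF f0(1) z(1)])
  have "(G1 f0 + G1 z, \<psi> + y) \<in> B2" using lop_add[OF B2 h1 h3] unfolding f0_def z_def .
  then have "(G1 (f0 + z), \<xi>) \<in> B2" using G1f h4 by simp
  then have "(G1 (f0 + z), G0 (f0 + z)) \<in> lcomp B1 B2" unfolding lcomp_def G0f using h2 by blast
  then have "(f0 + z, h + scaleC l (f0 + z)) \<in> A_ext T G0 G1 (lcomp B1 B2)"
    using fT by (simp add: A_ext_iff)
  then have "(f0 + z, h) \<in> lshift (A_ext T G0 G1 (lcomp B1 B2)) l" unfolding lshift_iff by force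
  then show ?thesis unfolding f0_def z_def by simp
qed

lemma chain_nec:
  assumes res: "l \<in> resolvent_set (ker_restr T G0)" and B2: "is_lop B2"
    and iii: "G1 ` {f \<in> ldom T. G0 f = 0} \<subseteq> ldom (lcomp B1 B2)"
    and fh: "(f, h) \<in> lshift (A_ext T G0 G1 (lcomp B1 B2)) l"
  shows "\<exists>\<psi> \<xi> y. (G1 (T.R0 l h), \<psi>) \<in> B2 \<and> (\<xi>, G0 f) \<in> B1 \<and> (G1 (T.gam l (G0 f)), y) \<in> B2
     \<and> \<psi> = \<xi> - y \<and> f = T.R0 l h + T.gam l (G0 f)"
proof -
  have w: "T.wres l" by (rule T.wres_res[OF res])
  obtain y0 where fy: "(f, y0) \<in> A_ext T G0 G1 (lcomp B1 B2)" and hy: "h = y0 - scaleC l f"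
    using fh unfolding lshift_iff by blast
  have fT: "(f, y0) \<in> T" and fB: "(G1 f, G0 f) \<in> lcomp B1 B2" using fy by (auto simp: A_ext_iff)
  then obtain \<xi> where \<xi>: "(G1 f, \<xi>) \<in> B2" "(\<xi>, G0 f) \<in> B1" unfolding lcomp_def by blast
  have dec1: "(f - T.R0 l h, scaleC l (f - T.R0 l h)) \<in> T" and dec2: "G0 (f - T.R0 l h) = G0 f"
    using T.decomp[OF w fT] unfolding hy by auto
  have gf: "T.gam l (G0 f) = f - T.R0 l h" using T.gam_eq[OF w dec1] dec2 by simp
  have "G1 (T.R0 l h) \<in> G1 ` {f \<in> ldom T. G0 f = 0}"
    using T.R0_dom[OF w] T.R0_prop(2)[OF w] by blast
  then have "G1 (T.R0 l h) \<in> ldom (lcomp B1 B2)" using iii by blast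
  then obtain \<psi> where \<psi>: "(G1 (T.R0 l h), \<psi>) \<in> B2" unfolding ldom_iff lcomp_def by blast
  have "(G1 f - G1 (T.R0 l h), \<xi> - \<psi>) \<in> B2" by (rule lop_diff[OF B2 \<xi>(1) \<psi>])
  moreover have "G1 f - G1 (T.R0 l h) = G1 (T.gam l (G0 f))"
    unfolding gf using G1_diff[OF fT T.R0_prop(1)[OF w]] by simp
  ultimately have "(G1 (T.gam l (G0 f)), \<xi> - \<psi>) \<in> B2" by simp
  moreover have "\<psi> = \<xi> - (\<xi> - \<psi>)" by simp
  moreover have "f = T.R0 l h + T.gam l (G0 f)" unfolding gf by simp
  ultimately show ?thesis using \<psi> \<xi>(2) by blast
qed

lemma formula:
  assumes res: "l \<in> resolvent_set (ker_restr T G0)" and B1: "is_lop B1" and B2: "is_lop B2"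
    and iii: "G1 ` {f \<in> ldom T. G0 f = 0} \<subseteq> ldom (lcomp B1 B2)"
  shows "converse (lshift (A_ext T G0 G1 (lcomp B1 B2)) l)
            = lsum (converse (lshift (ker_restr T G0) l))
                (lcomp (gamma_field T G0 l)
                  (lcomp B1
                    (lcomp (converse (lid_minus (lcomp B2 (lcomp (weyl T G0 G1 l) B1))))
                      (lcomp B2 (ladj (gamma_field Tt Gt0 (cnj l)))))))"
    (is "?L = ?R")
proof -
  have w: "T.wres l" by (rule T.wres_res[OF res])
  have Q_iff: "(h, z) \<in> lcomp (gamma_field T G0 l)
                  (lcomp B1
                    (lcomp (converse (lid_minus (lcomp B2 (lcomp (weyl T G0 G1 l) B1))))
                      (lcomp B2 (ladj (gamma_field Tt Gt0 (cnj l))))))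
       \<longleftrightarrow> (\<exists>\<psi> \<xi> \<phi> y. (G1 (T.R0 l h), \<psi>) \<in> B2 \<and> (\<xi>, \<phi>) \<in> B1 \<and> (G1 (T.gam l \<phi>), y) \<in> B2
              \<and> \<psi> = \<xi> - y \<and> z = T.gam l \<phi>)" for h z
  proof
    assume "(h, z) \<in> lcomp (gamma_field T G0 l)
                  (lcomp B1
                    (lcomp (converse (lid_minus (lcomp B2 (lcomp (weyl T G0 G1 l) B1))))
                      (lcomp B2 (ladj (gamma_field Tt Gt0 (cnj l))))))"
    then obtain k \<psi> \<xi> \<phi> where c1: "(h, k) \<in> ladj (gamma_field Tt Gt0 (cnj l))" and c2: "(k, \<psi>) \<in> B2"
      and c3: "(\<psi>, \<xi>) \<in> converse (lid_minus (lcomp B2 (lcomp (weyl T G0 G1 l) B1)))"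
      and c4: "(\<xi>, \<phi>) \<in> B1" and c5: "(\<phi>, z) \<in> gamma_field T G0 l"
      unfolding lcomp_def by blast
    have k: "k = G1 (T.R0 l h)" using c1 unfolding Gs_eq[OF res] by blast
    have z: "z = T.gam l \<phi>" using c5 unfolding T.gamma_field_eq[OF w] by blast
    obtain y where y: "(\<xi>, y) \<in> lcomp B2 (lcomp (weyl T G0 G1 l) B1)" "\<psi> = \<xi> - y"
      using c3 unfolding lid_minus_def by blast
    then obtain \<phi>' m where "(\<xi>, \<phi>') \<in> B1" "(\<phi>', m) \<in> weyl T G0 G1 l" "(m, y) \<in> B2"
      unfolding lcomp_def by blast
    moreover have "\<phi>' = \<phi>" using lop_sv[OF B1 c4] \<open>(\<xi>, \<phi>') \<in> B1\<close> by simp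
    ultimately have "(G1 (T.gam l \<phi>), y) \<in> B2" unfolding weyl_eq[OF w] by blast
    then show "\<exists>\<psi> \<xi> \<phi> y. (G1 (T.R0 l h), \<psi>) \<in> B2 \<and> (\<xi>, \<phi>) \<in> B1 \<and> (G1 (T.gam l \<phi>), y) \<in> B2
              \<and> \<psi> = \<xi> - y \<and> z = T.gam l \<phi>"
      using c2 k c4 y(2) z by blast
  next
    assume "\<exists>\<psi> \<xi> \<phi> y. (G1 (T.R0 l h), \<psi>) \<in> B2 \<and> (\<xi>, \<phi>) \<in> B1 \<and> (G1 (T.gam l \<phi>), y) \<in> B2
              \<and> \<psi> = \<xi> - y \<and> z = T.gam l \<phi>"
    then obtain \<psi> \<xi> \<phi> y where c: "(G1 (T.R0 l h), \<psi>) \<in> B2" "(\<xi>, \<phi>) \<in> B1" "(G1 (T.gam l \<phi>), y) \<in> B2"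
      "\<psi> = \<xi> - y" "z = T.gam l \<phi>" by blast
    have "(h, G1 (T.R0 l h)) \<in> ladj (gamma_field Tt Gt0 (cnj l))" unfolding Gs_eq[OF res] by blast
    moreover have "(\<phi>, G1 (T.gam l \<phi>)) \<in> weyl T G0 G1 l" unfolding weyl_eq[OF w] by blast
    then have "(\<xi>, y) \<in> lcomp B2 (lcomp (weyl T G0 G1 l) B1)" using c(2,3) unfolding lcomp_def by blast
    then have "(\<psi>, \<xi>) \<in> converse (lid_minus (lcomp B2 (lcomp (weyl T G0 G1 l) B1)))"
      unfolding lid_minus_def c(4) by blast
    moreover have "(\<phi>, z) \<in> gamma_field T G0 l" unfolding T.gamma_field_eq[OF w] c(5) by blast
    ultimately show "(h, z) \<in> lcomp (gamma_field T G0 l)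
                  (lcomp B1
                    (lcomp (converse (lid_minus (lcomp B2 (lcomp (weyl T G0 G1 l) B1))))
                      (lcomp B2 (ladj (gamma_field Tt Gt0 (cnj l))))))"
      unfolding lcomp_def using c(1,2) by blast
  qed
  show ?thesis
  proof (intro set_eqI iffI)
    fix p assume "p \<in> ?L"
    then obtain h f where p: "p = (h, f)" and fh: "(f, h) \<in> lshift (A_ext T G0 G1 (lcomp B1 B2)) l"
      by (cases p) auto
    obtain \<psi> \<xi> y where c: "(G1 (T.R0 l h), \<psi>) \<in> B2" "(\<xi>, G0 f) \<in> B1" "(G1 (T.gam l (G0 f)), y) \<in> B2"
      "\<psi> = \<xi> - y" and f: "f = T.R0 l h + T.gam l (G0 f)"
      using chain_nec[OF res B2 iii fh] by blast
    have "(h, T.gam l (G0 f)) \<in> lcomp (gamma_field T G0 l)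
                  (lcomp B1
                    (lcomp (converse (lid_minus (lcomp B2 (lcomp (weyl T G0 G1 l) B1))))
                      (lcomp B2 (ladj (gamma_field Tt Gt0 (cnj l))))))"
      unfolding Q_iff using c by blast
    moreover have "(h, T.R0 l h) \<in> converse (lshift (ker_restr T G0) l)"
      unfolding T.conv_A0[OF w] by blast
    ultimately show "p \<in> ?R" unfolding lsum_def p using f by blast
  next
    fix p assume "p \<in> ?R"
    then obtain h a z where p: "p = (h, a + z)" and a: "(h, a) \<in> converse (lshift (ker_restr T G0) l)"
      and z: "(h, z) \<in> lcomp (gamma_field T G0 l)
                  (lcomp B1
                    (lcomp (converse (lid_minus (lcomp B2 (lcomp (weyl T G0 G1 l) B1))))
                      (lcomp B2 (ladj (gamma_field Tt Gt0 (cnj l))))))"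
      unfolding lsum_def by blast
    have a': "a = T.R0 l h" using a unfolding T.conv_A0[OF w] by blast
    obtain \<psi> \<xi> \<phi> y where c: "(G1 (T.R0 l h), \<psi>) \<in> B2" "(\<xi>, \<phi>) \<in> B1" "(G1 (T.gam l \<phi>), y) \<in> B2"
      "\<psi> = \<xi> - y" "z = T.gam l \<phi>" using z unfolding Q_iff by blast
    show "p \<in> ?L" unfolding p a' c(5) by (rule chain_sol[OF res B2 c(1-4)])
  qed
qed

end

lemma norm_bound_max: "norm y \<le> K * norm x \<Longrightarrow> norm y \<le> max K 0 * norm x"
proof -
  assume "norm y \<le> K * norm x"
  moreover have "K * norm x \<le> max K 0 * norm x" by (intro mult_right_mono) auto
  ultimately show ?thesis by linarith
qed

lemma lshift_diff:
  assumes A: "is_lop A" and "(x, h) \<in> lshift A l" "(x', h') \<in> lshift A l"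
  shows "(x - x', h - h') \<in> lshift A l"
proof -
  obtain y where y: "(x, y) \<in> A" "h = y - scaleC l x" using assms(2) unfolding lshift_iff by blast
  obtain y' where y': "(x', y') \<in> A" "h' = y' - scaleC l x'" using assms(3) unfolding lshift_iff by blast
  have "(x - x', y - y') \<in> A" by (rule lop_diff[OF A y(1) y'(1)])
  moreover have "h - h' = (y - y') - scaleC l (x - x')" using y(2) y'(2) by (simp add: scaleC_diff_right algebra_simps)
  ultimately show ?thesis unfolding lshift_iff by blast
qed

lemma inv_lop:
  assumes C: "is_lop C" and res: "1 \<in> resolvent_set C"
  shows "is_lop (converse (lid_minus C))"
proof (rule is_lopI)
  have mem: "(a, b) \<in> converse (lid_minus C) \<longleftrightarrow> (\<exists>y. (b, y) \<in> C \<and> a = b - y)" for a b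
    unfolding lid_minus_def by blast
  show "(0, 0) \<in> converse (lid_minus C)" unfolding mem using lop_zero[OF C] by force
  show "(x + x', y + y') \<in> converse (lid_minus C)"
    if h1: "(x, y) \<in> converse (lid_minus C)" and h2: "(x', y') \<in> converse (lid_minus C)" for x y x' y'
  proof -
    obtain z where z: "(y, z) \<in> C" "x = y - z" using h1 unfolding mem by blast
    obtain z' where z': "(y', z') \<in> C" "x' = y' - z'" using h2 unfolding mem by blast
    have "(y + y', z + z') \<in> C" by (rule lop_add[OF C z(1) z'(1)])
    moreover have "x + x' = (y + y') - (z + z')" using z(2) z'(2) by simp
    ultimately show ?thesis unfolding mem by blast
  qed
  show "(scaleC c x, scaleC c y) \<in> converse (lid_minus C)" if h1: "(x, y) \<in> converse (lid_minus C)" for c x y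
  proof -
    obtain z where z: "(y, z) \<in> C" "x = y - z" using h1 unfolding mem by blast
    have "(scaleC c y, scaleC c z) \<in> C" by (rule lop_scale[OF C z(1)])
    moreover have "scaleC c x = scaleC c y - scaleC c z" using z(2) by (simp add: scaleC_diff_right)
    ultimately show ?thesis unfolding mem by blast
  qed
  show "y = 0" if h1: "(0, y) \<in> converse (lid_minus C)" for y
  proof -
    obtain z where z: "(y, z) \<in> C" "0 = y - z" using h1 unfolding mem by blast
    then have "(y, y) \<in> C" by simp
    then have "(y, 0) \<in> lshift C 1" unfolding lshift_iff by (force simp: scaleC_one)
    then show ?thesis by (rule resD(2)[OF res])
  qed
qed

lemma closable_of_closed: "is_lop G \<Longrightarrow> closed G \<Longrightarrow> closable G"
  by (simp add: closable_def closure_closed)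

lemma closed_Id: "closed (Id :: ('a::metric_space \<times> 'a) set)"
proof (rule closed_pairsI)
  fix S x y assume S: "\<forall>n. S n \<in> (Id :: ('a \<times> 'a) set)" and Sx: "(\<lambda>n. fst (S n)) \<longlonglongrightarrow> x"
    and Sy: "(\<lambda>n. snd (S n)) \<longlonglongrightarrow> y"
  have "fst (S n) = snd (S n)" for n
  proof -
    have "S n \<in> Id" using S by blast
    then show ?thesis by (cases "S n") auto
  qed
  then have "(\<lambda>n. fst (S n)) = (\<lambda>n. snd (S n))" by blast
  then have "x = y" using Sx Sy LIMSEQ_unique by metis
  then show "(x, y) \<in> Id" by simp
qed

lemma lop_Id: "is_lop (Id :: ('a::chilbert \<times> 'a) set)"
  by (rule is_lopI) auto

context triple begin

lemma G1_zero: "G1 0 = 0"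
  using G1_add[OF lop_zero[OF T.T_lop] lop_zero[OF T.T_lop]] by simp

lemma A_ext_lop:
  assumes B: "is_lop B"
  shows "is_lop (A_ext T G0 G1 B)"
proof (rule is_lopI)
  show "(0, 0) \<in> A_ext T G0 G1 B"
    using lop_zero[OF T.T_lop] lop_zero[OF B] by (simp add: A_ext_iff G1_zero T.G0_zero)
  show "(x + x', y + y') \<in> A_ext T G0 G1 B"
    if h1: "(x, y) \<in> A_ext T G0 G1 B" and h2: "(x', y') \<in> A_ext T G0 G1 B" for x y x' y'
  proof -
    have a: "(x, y) \<in> T" "(G1 x, G0 x) \<in> B" using h1 by (auto simp: A_ext_iff)
    have b: "(x', y') \<in> T" "(G1 x', G0 x') \<in> B" using h2 by (auto simp: A_ext_iff)
    have "(G1 x + G1 x', G0 x + G0 x') \<in> B" by (rule lop_add[OF B a(2) b(2)])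
    then show ?thesis using lop_add[OF T.T_lop a(1) b(1)] G1_add[OF a(1) b(1)] T.G0_add[OF a(1) b(1)]
      by (simp add: A_ext_iff)
  qed
  show "(scaleC c x, scaleC c y) \<in> A_ext T G0 G1 B" if h1: "(x, y) \<in> A_ext T G0 G1 B" for c x y
  proof -
    have a: "(x, y) \<in> T" "(G1 x, G0 x) \<in> B" using h1 by (auto simp: A_ext_iff)
    have "(scaleC c (G1 x), scaleC c (G0 x)) \<in> B" by (rule lop_scale[OF B a(2)])
    then show ?thesis using lop_scale[OF T.T_lop a(1)] G1_scale[OF a(1)] T.G0_scale[OF a(1)]
      by (simp add: A_ext_iff)
  qed
  show "y = 0" if "(0, y) \<in> A_ext T G0 G1 B" for y
    using that lop_zero_sv[OF T.T_lop] by (auto simp: A_ext_iff)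
qed

end

context triple begin

lemma main1:
  assumes B1c: "closable B1" and B2c: "closable B2" and res0: "l0 \<in> resolvent_set (ker_restr T G0)"
    and Mc': "closable (lcomp (weyl T G0 G1 l0) B1)"
    and i: "1 \<in> resolvent_set (lcomp B2 (closure (lcomp (weyl T G0 G1 l0) B1)))"
    and ii: "lran (lcomp B2 (closure (lcomp (weyl T G0 G1 l0) B1))) \<subseteq> ldom B1"
    and iii: "G1 ` {f \<in> ldom T. G0 f = 0} \<subseteq> ldom (lcomp B1 B2)"
  shows "closed_lop (A_ext T G0 G1 (lcomp B1 B2)) \<and> resolvent_set (A_ext T G0 G1 (lcomp B1 B2)) \<noteq> {}"
proof -
  define A where "A = A_ext T G0 G1 (lcomp B1 B2)"
  define M where "M = weyl T G0 G1 l0"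
  define Cb where "Cb = lcomp B2 (closure (lcomp M B1))"
  define Inv where "Inv = converse (lid_minus Cb)"
  define E1 where "E1 = {(h, G1 (T.R0 l0 h)) | h. True}"
  define E2 where "E2 = E1 O B2"
  define E3 where "E3 = E2 O Inv"
  define E4 where "E4 = E3 O B1"
  have w: "T.wres l0" by (rule T.wres_res[OF res0])
  have B1lop: "is_lop B1" and B2lop: "is_lop B2" using B1c B2c by (auto simp: closable_def)
  have Alop: "is_lop A" unfolding A_def by (intro A_ext_lop is_lop_lcomp B1lop B2lop)
  have Mclop: "is_lop (closure (lcomp M B1))" using Mc' by (simp add: closable_def M_def)
  have Cblop: "is_lop Cb" unfolding Cb_def by (rule is_lop_lcomp[OF B2lop Mclop])
  have i': "1 \<in> resolvent_set Cb" using i by (simp add: Cb_def M_def)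
  have Invlop: "is_lop Inv" unfolding Inv_def by (rule inv_lop[OF Cblop i'])
  have Inv_mem: "(\<psi>, \<xi>) \<in> Inv \<longleftrightarrow> (\<exists>y. (\<xi>, y) \<in> Cb \<and> \<psi> = \<xi> - y)" for \<psi> \<xi>
    unfolding Inv_def lid_minus_def by blast
  have Cb_mem: "(\<xi>, y) \<in> Cb \<longleftrightarrow> (\<exists>m. (\<xi>, m) \<in> closure (lcomp M B1) \<and> (m, y) \<in> B2)" for \<xi> y
    unfolding Cb_def lcomp_def by blast
  have M_mem: "(\<phi>, G1 (T.gam l0 \<phi>)) \<in> M" for \<phi> unfolding M_def weyl_eq[OF w] by blast
  have key_m: "m = G1 (T.gam l0 \<phi>)" if a1: "(\<xi>, \<phi>) \<in> B1" and a2: "(\<xi>, m) \<in> closure (lcomp M B1)" for \<xi> \<phi> m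
  proof -
    have "(\<xi>, G1 (T.gam l0 \<phi>)) \<in> lcomp M B1" unfolding lcomp_def using a1 M_mem by blast
    then have "(\<xi>, G1 (T.gam l0 \<phi>)) \<in> closure (lcomp M B1)" using closure_subset by blast
    then show ?thesis using lop_sv[OF Mclop a2] by simp
  qed
  have sol: "(h, T.R0 l0 h + T.gam l0 \<phi>) \<in> converse (lshift A l0)"
    if a1: "(G1 (T.R0 l0 h), \<psi>) \<in> B2" and a2: "(\<psi>, \<xi>) \<in> Inv" and a3: "(\<xi>, \<phi>) \<in> B1" for h \<psi> \<xi> \<phi>
  proof -
    obtain y where y: "(\<xi>, y) \<in> Cb" "\<psi> = \<xi> - y" using a2 unfolding Inv_mem by blast
    then obtain m where m: "(\<xi>, m) \<in> closure (lcomp M B1)" "(m, y) \<in> B2" unfolding Cb_mem by blast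
    have "m = G1 (T.gam l0 \<phi>)" by (rule key_m[OF a3 m(1)])
    then show ?thesis unfolding A_def using chain_sol[OF res0 B2lop a1 a3 _ y(2)] m(2) by simp
  qed
  have tot: "\<exists>\<psi> \<xi> \<phi>. (G1 (T.R0 l0 h), \<psi>) \<in> B2 \<and> (\<psi>, \<xi>) \<in> Inv \<and> (\<xi>, \<phi>) \<in> B1" for h
  proof -
    have "G1 (T.R0 l0 h) \<in> G1 ` {f \<in> ldom T. G0 f = 0}"
      using T.R0_dom[OF w] T.R0_prop(2)[OF w] by blast
    then have "G1 (T.R0 l0 h) \<in> ldom (lcomp B1 B2)" using iii by blast
    then obtain \<psi> where \<psi>: "(G1 (T.R0 l0 h), \<psi>) \<in> B2" "\<psi> \<in> ldom B1"
      unfolding ldom_iff lcomp_def by blast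
    have "- \<psi> \<in> lran (lshift Cb 1)" using resD(1)[OF i'] by simp
    then obtain \<xi> where "(\<xi>, - \<psi>) \<in> lshift Cb 1" unfolding lran_iff by blast
    then obtain y where y: "(\<xi>, y) \<in> Cb" "- \<psi> = y - \<xi>" unfolding lshift_iff by (auto simp: scaleC_one)
    have \<psi>\<xi>: "\<psi> = \<xi> - y" using y(2) by (simp add: algebra_simps minus_equation_iff)
    have "(\<psi>, \<xi>) \<in> Inv" unfolding Inv_mem using y(1) \<psi>\<xi> by blast
    have "y \<in> lran Cb" unfolding lran_iff using y(1) by blast
    then have "y \<in> ldom B1" using ii unfolding Cb_def M_def by blast
    then have "\<psi> + y \<in> ldom B1" by (rule ldom_add[OF B1lop \<psi>(2)])
    then obtain \<phi> where "(\<xi>, \<phi>) \<in> B1" unfolding ldom_iff using \<psi>\<xi> by auto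
    then show ?thesis using \<psi>(1) \<open>(\<psi>, \<xi>) \<in> Inv\<close> by blast
  qed
  have surj: "lran (lshift A l0) = UNIV"
  proof -
    have "h \<in> lran (lshift A l0)" for h
    proof -
      obtain \<psi> \<xi> \<phi> where c: "(G1 (T.R0 l0 h), \<psi>) \<in> B2" "(\<psi>, \<xi>) \<in> Inv" "(\<xi>, \<phi>) \<in> B1" using tot by blast
      show ?thesis using sol[OF c] unfolding lran_iff by blast
    qed
    then show ?thesis by blast
  qed
  have inj: "x = 0" if a1: "(x, 0) \<in> lshift A l0" for x
  proof -
    obtain y0 where "(x, y0) \<in> A" "0 = y0 - scaleC l0 x" using a1 unfolding lshift_iff by blast
    then have xT: "(x, scaleC l0 x) \<in> T" and xB: "(G1 x, G0 x) \<in> lcomp B1 B2"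
      unfolding A_def by (auto simp: A_ext_iff)
    obtain \<xi> where \<xi>: "(G1 x, \<xi>) \<in> B2" "(\<xi>, G0 x) \<in> B1" using xB unfolding lcomp_def by blast
    have gx: "T.gam l0 (G0 x) = x" by (rule T.gam_eq[OF w xT])
    have "(\<xi>, G1 x) \<in> lcomp M B1" unfolding lcomp_def using \<xi>(2) M_mem[of "G0 x"] gx by auto
    then have "(\<xi>, G1 x) \<in> closure (lcomp M B1)" using closure_subset by blast
    then have "(\<xi>, \<xi>) \<in> Cb" unfolding Cb_mem using \<xi>(1) by blast
    then have "(\<xi>, 0) \<in> lshift Cb 1" unfolding lshift_iff by (force simp: scaleC_one)
    then have "\<xi> = 0" by (rule resD(2)[OF i'])
    then have "G0 x = 0" using \<xi>(2) lop_zero_sv[OF B1lop] by simp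
    then show "x = 0" by (rule T.wres_inj[OF w xT])
  qed
  have E1lop: "is_lop E1" unfolding E1_def
  proof (rule graph_lop)
    show "G1 (T.R0 l0 (x + y)) = G1 (T.R0 l0 x) + G1 (T.R0 l0 y)" for x y
      unfolding T.R0_add[OF w] by (rule G1_add[OF T.R0_prop(1)[OF w] T.R0_prop(1)[OF w]])
    show "G1 (T.R0 l0 (scaleC c x)) = scaleC c (G1 (T.R0 l0 x))" for c x
      unfolding T.R0_scale[OF w] by (rule G1_scale[OF T.R0_prop(1)[OF w]])
  qed
  obtain K1 where K1: "\<And>h. norm (G1 (T.R0 l0 h)) \<le> K1 * norm h" using E1_bounded[OF res0] by blast
  have E1b: "(x, y) \<in> E1 \<Longrightarrow> norm y \<le> K1 * norm x" for x y using K1 unfolding E1_def by blast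
  have E1tot: "\<exists>y. (x, y) \<in> E1" for x unfolding E1_def by blast
  have E2tot: "\<exists>y. (x, y) \<in> E1 O B2" for x using tot[of x] unfolding E1_def by blast
  have E2cl: "closed E2" unfolding E2_def by (rule closable_comp_closed[OF E1lop E1b E1tot B2c E2tot])
  have E2lop: "is_lop E2" unfolding E2_def by (rule is_lop_relcomp[OF E1lop B2lop])
  obtain K2 where K2: "\<And>x y. (x, y) \<in> E2 \<Longrightarrow> norm y \<le> K2 * norm x"
    using cgt_rel[OF E2lop E2cl] E2tot unfolding E2_def by blast
  obtain Ki where Ki: "\<And>a b. (a, b) \<in> lshift Cb 1 \<Longrightarrow> norm a \<le> Ki * norm b" using resD(3)[OF i'] by blast
  have Invb: "norm \<xi> \<le> Ki * norm \<psi>" if a1: "(\<psi>, \<xi>) \<in> Inv" for \<psi> \<xi>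
  proof -
    obtain y where y: "(\<xi>, y) \<in> Cb" "\<psi> = \<xi> - y" using a1 unfolding Inv_mem by blast
    then have "(\<xi>, y - \<xi>) \<in> lshift Cb 1" unfolding lshift_iff by (force simp: scaleC_one)
    then have "norm \<xi> \<le> Ki * norm (y - \<xi>)" by (rule Ki)
    then show ?thesis using y(2) by (simp add: norm_minus_commute)
  qed
  obtain K3 where K3: "\<And>x z. (x, z) \<in> E3 \<Longrightarrow> norm z \<le> K3 * norm x"
    using bounded_relcomp[of E2 K2 Inv Ki, OF K2 Invb] unfolding E3_def by blast
  have E3lop: "is_lop E3" unfolding E3_def by (rule is_lop_relcomp[OF E2lop Invlop])
  have E3tot: "\<exists>y. (x, y) \<in> E3" for x using tot[of x] unfolding E3_def E2_def E1_def by blast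
  have E4tot: "\<exists>y. (x, y) \<in> E3 O B1" for x using tot[of x] unfolding E3_def E2_def E1_def by blast
  have E4cl: "closed E4" unfolding E4_def by (rule closable_comp_closed[OF E3lop K3 E3tot B1c E4tot])
  have E4lop: "is_lop E4" unfolding E4_def by (rule is_lop_relcomp[OF E3lop B1lop])
  obtain K4 where K4: "\<And>x y. (x, y) \<in> E4 \<Longrightarrow> norm y \<le> K4 * norm x"
    using cgt_rel[OF E4lop E4cl] E4tot unfolding E4_def by blast
  obtain K5 where K5: "\<And>\<phi>. norm (T.gam l0 \<phi>) \<le> K5 * norm \<phi>" using gam_bounded[OF res0] by blast
  obtain K0 where K0: "\<And>h. norm (T.R0 l0 h) \<le> K0 * norm h" using T.R0_bound[OF res0] by blast
  have bound: "norm x \<le> (max K0 0 + max K5 0 * max K4 0) * norm h" if xh: "(x, h) \<in> lshift A l0" for x h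
  proof -
    obtain \<phi> where \<phi>: "(h, \<phi>) \<in> E4" using E4tot unfolding E4_def by blast
    then obtain \<psi> \<xi> where c: "(G1 (T.R0 l0 h), \<psi>) \<in> B2" "(\<psi>, \<xi>) \<in> Inv" "(\<xi>, \<phi>) \<in> B1"
      unfolding E4_def E3_def E2_def E1_def by blast
    have "(T.R0 l0 h + T.gam l0 \<phi>, h) \<in> lshift A l0" using sol[OF c] by simp
    from lshift_diff[OF Alop xh this] have "(x - (T.R0 l0 h + T.gam l0 \<phi>), 0) \<in> lshift A l0" by simp
    then have x: "x = T.R0 l0 h + T.gam l0 \<phi>" using inj by fastforce
    have n1: "norm (T.R0 l0 h) \<le> max K0 0 * norm h" by (rule norm_bound_max[OF K0])
    have n2: "norm (T.gam l0 \<phi>) \<le> max K5 0 * norm \<phi>" by (rule norm_bound_max[OF K5])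
    have n3: "norm \<phi> \<le> max K4 0 * norm h" by (rule norm_bound_max[OF K4[OF \<phi>]])
    have "norm x \<le> norm (T.R0 l0 h) + norm (T.gam l0 \<phi>)" unfolding x by (rule norm_triangle_ineq)
    also have "\<dots> \<le> max K0 0 * norm h + max K5 0 * (max K4 0 * norm h)"
      using n1 n2 n3 by (smt (verit, best) max.cobounded2 mult_left_mono)
    finally show ?thesis by (simp add: algebra_simps)
  qed
  have res: "l0 \<in> resolvent_set A"
    unfolding resolvent_set_def using surj inj bound by blast
  have "closed A" by (rule resolvent_closed[OF Alop res])
  then show ?thesis using Alop res unfolding A_def closed_lop_def by blast
qed

end

theorem corollary4p9:
  fixes S St T Tt :: "('h::chilbert, 'h) lop"
    and G0 G1 Gt0 Gt1 :: "'h \<Rightarrow> 'g::chilbert"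
    and B1 B2 B :: "('g, 'g) lop"
    and l0 l0' :: complex
  assumes sep: "\<exists>D :: 'h set. countable D \<and> closure D = UNIV"
    and S_op: "closed_lop S" "densely_defined S"
    and St_op: "closed_lop St" "densely_defined St"
    and adj_pair: "\<forall>f Sf g Stg. (f, Sf) \<in> S \<longrightarrow> (g, Stg) \<in> St \<longrightarrow> cinner Sf g = cinner f Stg"
    and T_core: "is_lop T" "T \<subseteq> ladj S" "closure T = ladj S"
    and Tt_core: "is_lop Tt" "Tt \<subseteq> ladj St" "closure Tt = ladj St"
    and lin: "clinear_on (ldom T) G0" "clinear_on (ldom T) G1"
             "clinear_on (ldom Tt) Gt0" "clinear_on (ldom Tt) Gt1"
    and Green: "\<forall>f Tf g Ttg. (f, Tf) \<in> T \<longrightarrow> (g, Ttg) \<in> Tt \<longrightarrow>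
                  cinner Tf g - cinner f Ttg = cinner (G1 f) (Gt0 g) - cinner (G0 f) (Gt1 g)"
    and M_cond: "ladj (ker_restr T G0) = ker_restr Tt Gt0" "ladj (ker_restr Tt Gt0) = ker_restr T G0"
    and ran_G0: "G0 ` ldom T = UNIV"
    and ran_Gt0: "Gt0 ` ldom Tt = UNIV"
    and rho_ne: "resolvent_set (ker_restr T G0) \<noteq> {}"
  shows
   "(closable B1 \<and> closable B2 \<and> l0 \<in> resolvent_set (ker_restr T G0)
     \<and> closable (lcomp (weyl T G0 G1 l0) B1)
     \<and> 1 \<in> resolvent_set (lcomp B2 (closure (lcomp (weyl T G0 G1 l0) B1)))
     \<and> lran (lcomp B2 (closure (lcomp (weyl T G0 G1 l0) B1))) \<subseteq> ldom B1
     \<and> G1 ` {f \<in> ldom T. G0 f = 0} \<subseteq> ldom (lcomp B1 B2)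
     \<longrightarrow> closed_lop (A_ext T G0 G1 (lcomp B1 B2))
       \<and> resolvent_set (A_ext T G0 G1 (lcomp B1 B2)) \<noteq> {}
       \<and> (\<forall>l \<in> resolvent_set (ker_restr T G0) \<inter> resolvent_set (A_ext T G0 G1 (lcomp B1 B2)).
            converse (lshift (A_ext T G0 G1 (lcomp B1 B2)) l)
            = lsum (converse (lshift (ker_restr T G0) l))
                (lcomp (gamma_field T G0 l)
                  (lcomp B1
                    (lcomp (converse (lid_minus (lcomp B2 (lcomp (weyl T G0 G1 l) B1))))
                      (lcomp B2 (ladj (gamma_field Tt Gt0 (cnj l))))))))) \<and>
    (closable B \<and> l0' \<in> resolvent_set (ker_restr T G0)
     \<and> 1 \<in> resolvent_set (lcomp B (weyl T G0 G1 l0'))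
     \<and> G1 ` {f \<in> ldom T. G0 f = 0} \<subseteq> ldom B
     \<longrightarrow> closed_lop (A_ext T G0 G1 B)
       \<and> resolvent_set (A_ext T G0 G1 B) \<noteq> {}
       \<and> (\<forall>l \<in> resolvent_set (ker_restr T G0) \<inter> resolvent_set (A_ext T G0 G1 B).
            converse (lshift (A_ext T G0 G1 B) l)
            = lsum (converse (lshift (ker_restr T G0) l))
                (lcomp (gamma_field T G0 l)
                  (lcomp (converse (lid_minus (lcomp B (weyl T G0 G1 l))))
                    (lcomp B (ladj (gamma_field Tt Gt0 (cnj l))))))))"
proof -
  interpret tr: triple T G0 Tt Gt0 G1 Gt1
    by unfold_locales (use T_core(1) Tt_core(1) lin Green M_cond(1) ran_G0 ran_Gt0 in auto)
  have P1: "closable B1 \<and> closable B2 \<and> l0 \<in> resolvent_set (ker_restr T G0)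
     \<and> closable (lcomp (weyl T G0 G1 l0) B1)
     \<and> 1 \<in> resolvent_set (lcomp B2 (closure (lcomp (weyl T G0 G1 l0) B1)))
     \<and> lran (lcomp B2 (closure (lcomp (weyl T G0 G1 l0) B1))) \<subseteq> ldom B1
     \<and> G1 ` {f \<in> ldom T. G0 f = 0} \<subseteq> ldom (lcomp B1 B2)
     \<longrightarrow> closed_lop (A_ext T G0 G1 (lcomp B1 B2))
       \<and> resolvent_set (A_ext T G0 G1 (lcomp B1 B2)) \<noteq> {}
       \<and> (\<forall>l \<in> resolvent_set (ker_restr T G0) \<inter> resolvent_set (A_ext T G0 G1 (lcomp B1 B2)).
            converse (lshift (A_ext T G0 G1 (lcomp B1 B2)) l)
            = lsum (converse (lshift (ker_restr T G0) l))
                (lcomp (gamma_field T G0 l)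
                  (lcomp B1
                    (lcomp (converse (lid_minus (lcomp B2 (lcomp (weyl T G0 G1 l) B1))))
                      (lcomp B2 (ladj (gamma_field Tt Gt0 (cnj l))))))))"
  proof (intro impI, elim conjE)
    assume B1c: "closable B1" and B2c: "closable B2" and res0: "l0 \<in> resolvent_set (ker_restr T G0)"
      and Mc': "closable (lcomp (weyl T G0 G1 l0) B1)"
      and i: "1 \<in> resolvent_set (lcomp B2 (closure (lcomp (weyl T G0 G1 l0) B1)))"
      and ii: "lran (lcomp B2 (closure (lcomp (weyl T G0 G1 l0) B1))) \<subseteq> ldom B1"
      and iii: "G1 ` {f \<in> ldom T. G0 f = 0} \<subseteq> ldom (lcomp B1 B2)"
    have B1lop: "is_lop B1" and B2lop: "is_lop B2" using B1c B2c by (auto simp: closable_def)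
    show "closed_lop (A_ext T G0 G1 (lcomp B1 B2))
       \<and> resolvent_set (A_ext T G0 G1 (lcomp B1 B2)) \<noteq> {}
       \<and> (\<forall>l \<in> resolvent_set (ker_restr T G0) \<inter> resolvent_set (A_ext T G0 G1 (lcomp B1 B2)).
            converse (lshift (A_ext T G0 G1 (lcomp B1 B2)) l)
            = lsum (converse (lshift (ker_restr T G0) l))
                (lcomp (gamma_field T G0 l)
                  (lcomp B1
                    (lcomp (converse (lid_minus (lcomp B2 (lcomp (weyl T G0 G1 l) B1))))
                      (lcomp B2 (ladj (gamma_field Tt Gt0 (cnj l))))))))"
      using tr.main1[OF B1c B2c res0 Mc' i ii iii] tr.formula[OF _ B1lop B2lop iii] by blast
  qed
  have P2: "closable B \<and> l0' \<in> resolvent_set (ker_restr T G0)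
     \<and> 1 \<in> resolvent_set (lcomp B (weyl T G0 G1 l0'))
     \<and> G1 ` {f \<in> ldom T. G0 f = 0} \<subseteq> ldom B
     \<longrightarrow> closed_lop (A_ext T G0 G1 B)
       \<and> resolvent_set (A_ext T G0 G1 B) \<noteq> {}
       \<and> (\<forall>l \<in> resolvent_set (ker_restr T G0) \<inter> resolvent_set (A_ext T G0 G1 B).
            converse (lshift (A_ext T G0 G1 B) l)
            = lsum (converse (lshift (ker_restr T G0) l))
                (lcomp (gamma_field T G0 l)
                  (lcomp (converse (lid_minus (lcomp B (weyl T G0 G1 l))))
                    (lcomp B (ladj (gamma_field Tt Gt0 (cnj l)))))))"
  proof (intro impI, elim conjE)
    assume Bc: "closable B" and res0: "l0' \<in> resolvent_set (ker_restr T G0)"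
      and i: "1 \<in> resolvent_set (lcomp B (weyl T G0 G1 l0'))"
      and iii: "G1 ` {f \<in> ldom T. G0 f = 0} \<subseteq> ldom B"
    have Blop: "is_lop B" using Bc by (simp add: closable_def)
    have Idc: "closable (Id :: ('g \<times> 'g) set)" by (rule closable_of_closed[OF lop_Id closed_Id])
    have eqM: "lcomp (weyl T G0 G1 l0') Id = weyl T G0 G1 l0'" by (simp add: lcomp_def)
    have Mcl: "closed (weyl T G0 G1 l0')" "is_lop (weyl T G0 G1 l0')" by (rule tr.weyl_closed[OF res0])+
    have Mc': "closable (lcomp (weyl T G0 G1 l0') Id)" unfolding eqM by (rule closable_of_closed[OF Mcl(2,1)])
    have i': "1 \<in> resolvent_set (lcomp B (closure (lcomp (weyl T G0 G1 l0') Id)))"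
      unfolding eqM closure_closed[OF Mcl(1)] by (rule i)
    have ii': "lran (lcomp B (closure (lcomp (weyl T G0 G1 l0') Id))) \<subseteq> ldom Id"
      by (auto simp: ldom_iff)
    have eqB: "lcomp Id B = B" by (simp add: lcomp_def)
    have iii': "G1 ` {f \<in> ldom T. G0 f = 0} \<subseteq> ldom (lcomp Id B)" unfolding eqB by (rule iii)
    have m: "closed_lop (A_ext T G0 G1 (lcomp Id B)) \<and> resolvent_set (A_ext T G0 G1 (lcomp Id B)) \<noteq> {}"
      by (rule tr.main1[OF Idc Bc res0 Mc' i' ii' iii'])
    have f: "converse (lshift (A_ext T G0 G1 (lcomp Id B)) l)
            = lsum (converse (lshift (ker_restr T G0) l))
                (lcomp (gamma_field T G0 l)
                  (lcomp Id
                    (lcomp (converse (lid_minus (lcomp B (lcomp (weyl T G0 G1 l) Id))))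
                      (lcomp B (ladj (gamma_field Tt Gt0 (cnj l)))))))"
      if "l \<in> resolvent_set (ker_restr T G0)" for l
      by (rule tr.formula[OF that lop_Id Blop iii'])
    show "closed_lop (A_ext T G0 G1 B)
       \<and> resolvent_set (A_ext T G0 G1 B) \<noteq> {}
       \<and> (\<forall>l \<in> resolvent_set (ker_restr T G0) \<inter> resolvent_set (A_ext T G0 G1 B).
            converse (lshift (A_ext T G0 G1 B) l)
            = lsum (converse (lshift (ker_restr T G0) l))
                (lcomp (gamma_field T G0 l)
                  (lcomp (converse (lid_minus (lcomp B (weyl T G0 G1 l))))
                    (lcomp B (ladj (gamma_field Tt Gt0 (cnj l)))))))"
      using m f unfolding eqB by (simp add: lcomp_def)
  qed
  show ?thesis using P1 P2 by blast
qed


end
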